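(* For $i=1,2$ let $(E_i,F_i)$ be a pair of dual spaces over a division ring $\mathbb{K}_i$, and let $g:\mathcal{L}_{F_1}(E_1)\to\mathcal{L}_{F_2}(E_2)$ be a map preserving arbitrary joins and sending atoms to atoms or $0$, such that $g(\mathcal{L}_{F_1}(E_1))$ has length $\ge3$. Then there is a semilinear map $f:E_1\to E_2$ inducing $g$, i.e. $g(\mathbb{K}_1v)=\mathbb{K}_2f(v)$ for all $v\in E_1$.
   Context: A pair of dual spaces $(E,F)$ over a division ring $\mathbb{K}$ consists of a left vector space $E$ and a right vector space $F$ over $\mathbb{K}$ with a non-degenerate bilinear map $\beta:E\times F\to\mathbb{K}$. For $A\subseteq E$, $A^\perp:=\{y\in F;\beta(x,y)=0\ \forall x\in A\}$, similarly for $B\subseteq F$; $\mathcal{L}_F(E):=\{A\subseteq E;A^{\perp\perp}=A\}$ ordered by inclusion (a complete lattice whose atoms are the one-dimensional subspaces). A semilinear map $f:E_1\to E_2$ is an additive map for which there is a homomorphism of division rings $\sigma:\mathbb{K}_1\to\mathbb{K}_2$ with $f(\lambda v)=\sigma(\lambda)f(v)$. $\mathbb{K}_2f(v)$ denotes the subspace spanned by $f(v)$ (zero if $f(v)=0$). *)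

theory Defs
  imports Main
begin

text \<open>Left vector space over a (possibly non-commutative) division ring, given by a scalar
multiplication on an abelian group (the whole type is the space).\<close>
definition left_vs :: "('k::division_ring \<Rightarrow> 'e::ab_group_add \<Rightarrow> 'e) \<Rightarrow> bool" where
  "left_vs sc \<longleftrightarrow>
     (\<forall>a x y. sc a (x + y) = sc a x + sc a y) \<and>
     (\<forall>a b x. sc (a + b) x = sc a x + sc b x) \<and>
     (\<forall>a b x. sc a (sc b x) = sc (a * b) x) \<and>
     (\<forall>x. sc 1 x = x)"

definition right_vs :: "('f::ab_group_add \<Rightarrow> 'k::division_ring \<Rightarrow> 'f) \<Rightarrow> bool" where
  "right_vs sc \<longleftrightarrow>
     (\<forall>a x y. sc (x + y) a = sc x a + sc y a) \<and>
     (\<forall>a b x. sc x (a + b) = sc x a + sc x b) \<and>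
     (\<forall>a b x. sc (sc x a) b = sc x (a * b)) \<and>
     (\<forall>x. sc x 1 = x)"

definition dual_pair ::
  "('k::division_ring \<Rightarrow> 'e::ab_group_add \<Rightarrow> 'e) \<Rightarrow> ('f::ab_group_add \<Rightarrow> 'k \<Rightarrow> 'f)
   \<Rightarrow> ('e \<Rightarrow> 'f \<Rightarrow> 'k) \<Rightarrow> bool" where
  "dual_pair scE scF beta \<longleftrightarrow>
     left_vs scE \<and> right_vs scF \<and>
     (\<forall>x x' y. beta (x + x') y = beta x y + beta x' y) \<and>
     (\<forall>a x y. beta (scE a x) y = a * beta x y) \<and>
     (\<forall>x y y'. beta x (y + y') = beta x y + beta x y') \<and>
     (\<forall>a x y. beta x (scF y a) = beta x y * a) \<and>
     (\<forall>x. (\<forall>y. beta x y = 0) \<longrightarrow> x = 0) \<and>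
     (\<forall>y. (\<forall>x. beta x y = 0) \<longrightarrow> y = 0)"

definition perpE :: "('e \<Rightarrow> 'f \<Rightarrow> 'k::zero) \<Rightarrow> 'e set \<Rightarrow> 'f set" where
  "perpE beta A = {y. \<forall>x\<in>A. beta x y = 0}"

definition perpF :: "('e \<Rightarrow> 'f \<Rightarrow> 'k::zero) \<Rightarrow> 'f set \<Rightarrow> 'e set" where
  "perpF beta B = {x. \<forall>y\<in>B. beta x y = 0}"

text \<open>The lattice L_F(E) of closed subsets A = A^perp perp, ordered by inclusion.\<close>
definition closedL :: "('e \<Rightarrow> 'f \<Rightarrow> 'k::zero) \<Rightarrow> 'e set set" where
  "closedL beta = {A. perpF beta (perpE beta A) = A}"

definition Ljoin :: "('e \<Rightarrow> 'f \<Rightarrow> 'k::zero) \<Rightarrow> 'e set set \<Rightarrow> 'e set" where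
  "Ljoin beta S = perpF beta (perpE beta (\<Union>S))"

definition Lbot :: "('e \<Rightarrow> 'f \<Rightarrow> 'k::zero) \<Rightarrow> 'e set" where
  "Lbot beta = Ljoin beta {}"

definition Latom :: "('e \<Rightarrow> 'f \<Rightarrow> 'k::zero) \<Rightarrow> 'e set \<Rightarrow> bool" where
  "Latom beta A \<longleftrightarrow> A \<in> closedL beta \<and> A \<noteq> Lbot beta \<and>
     (\<forall>B\<in>closedL beta. B \<subset> A \<longrightarrow> B = Lbot beta)"

definition length_ge :: "'a set set \<Rightarrow> nat \<Rightarrow> bool" where
  "length_ge P n \<longleftrightarrow> (\<exists>c. (\<forall>i\<le>n. c i \<in> P) \<and> (\<forall>i<n. c i \<subset> c (Suc i)))"

definition divring_hom :: "('k1::division_ring \<Rightarrow> 'k2::division_ring) \<Rightarrow> bool" where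
  "divring_hom \<sigma> \<longleftrightarrow> (\<forall>a b. \<sigma> (a + b) = \<sigma> a + \<sigma> b) \<and>
     (\<forall>a b. \<sigma> (a * b) = \<sigma> a * \<sigma> b) \<and> \<sigma> 1 = 1"

definition semilinear ::
  "('k1::division_ring \<Rightarrow> 'e1::ab_group_add \<Rightarrow> 'e1) \<Rightarrow> ('k2::division_ring \<Rightarrow> 'e2::ab_group_add \<Rightarrow> 'e2)
   \<Rightarrow> ('e1 \<Rightarrow> 'e2) \<Rightarrow> bool" where
  "semilinear sc1 sc2 f \<longleftrightarrow> (\<forall>x y. f (x + y) = f x + f y) \<and>
     (\<exists>\<sigma>. divring_hom \<sigma> \<and> (\<forall>a v. f (sc1 a v) = sc2 (\<sigma> a) (f v)))"

definition span1 :: "('k \<Rightarrow> 'e \<Rightarrow> 'e) \<Rightarrow> 'e \<Rightarrow> 'e set" where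
  "span1 sc v = range (\<lambda>a. sc a v)"

end

theory Submission
  imports Defs
begin

locale lvs =
  fixes sc :: "'k::division_ring \<Rightarrow> 'e::ab_group_add \<Rightarrow> 'e" (infixr "\<cdot>" 75)
  assumes lvs: "left_vs sc"
begin

lemma add_dist[simp]: "a \<cdot> (x + y) = a \<cdot> x + a \<cdot> y"
  using lvs unfolding left_vs_def by blast
lemma sc_add: "(a + b) \<cdot> x = a \<cdot> x + b \<cdot> x"
  using lvs unfolding left_vs_def by blast
lemma sc_assoc[simp]: "a \<cdot> (b \<cdot> x) = (a * b) \<cdot> x"
  using lvs unfolding left_vs_def by blast
lemma sc_one[simp]: "1 \<cdot> x = x"
  using lvs unfolding left_vs_def by blast
lemma sc_zero1[simp]: "0 \<cdot> x = 0"
proof -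
  have "0 \<cdot> x = (0 + 0) \<cdot> x" by simp
  also have "\<dots> = 0 \<cdot> x + 0 \<cdot> x" by (rule sc_add)
  finally show ?thesis by simp
qed
lemma sc_zero2[simp]: "a \<cdot> 0 = 0"
proof -
  have "a \<cdot> 0 = a \<cdot> (0 + 0)" by simp
  also have "\<dots> = a \<cdot> 0 + a \<cdot> 0" by (rule add_dist)
  finally show ?thesis by simp
qed
lemma sc_neg1[simp]: "(- a) \<cdot> x = - (a \<cdot> x)"
proof -
  have "(- a) \<cdot> x + a \<cdot> x = 0" by (simp add: sc_add[symmetric])
  thus ?thesis by (simp add: eq_neg_iff_add_eq_0)
qed
lemma sc_neg2[simp]: "a \<cdot> (- x) = - (a \<cdot> x)"
proof -
  have "a \<cdot> (- x) + a \<cdot> x = 0" by (simp add: add_dist[symmetric])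
  thus ?thesis by (simp add: eq_neg_iff_add_eq_0)
qed
lemma sc_diff1: "(a - b) \<cdot> x = a \<cdot> x - b \<cdot> x"
  using sc_add[of a "-b" x] by simp
lemma sc_diff2[simp]: "a \<cdot> (x - y) = a \<cdot> x - a \<cdot> y"
  using add_dist[of a x "-y"] by simp
lemma sc_eq0[simp]: "a \<cdot> x = 0 \<longleftrightarrow> a = 0 \<or> x = 0"
proof
  assume h: "a \<cdot> x = 0"
  show "a = 0 \<or> x = 0"
  proof (cases "a = 0")
    case False
    have "x = (inverse a * a) \<cdot> x" using False by simp
    also have "\<dots> = inverse a \<cdot> (a \<cdot> x)" by simp
    finally show ?thesis using h by simp
  qed simp
qed auto

lemma sc_cancel: assumes "a \<cdot> x = b \<cdot> x" "x \<noteq> 0" shows "a = b"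
proof -
  have "(a - b) \<cdot> x = 0" using assms by (simp add: sc_diff1)
  thus ?thesis using assms by simp
qed

lemma sc_inv: "a \<noteq> 0 \<Longrightarrow> inverse a \<cdot> (a \<cdot> x) = x" by simp
lemma sc_inv2: "a \<noteq> 0 \<Longrightarrow> a \<cdot> (inverse a \<cdot> x) = x" by simp

definition sp1 :: "'e \<Rightarrow> 'e set" where "sp1 v = span1 sc v"
definition sp2 :: "'e \<Rightarrow> 'e \<Rightarrow> 'e set" where "sp2 u v = {a \<cdot> u + b \<cdot> v | a b. True}"
definition ind2 :: "'e \<Rightarrow> 'e \<Rightarrow> bool" where
  "ind2 u v \<longleftrightarrow> (\<forall>a b. a \<cdot> u + b \<cdot> v = 0 \<longrightarrow> a = 0 \<and> b = 0)"
definition ind3 :: "'e \<Rightarrow> 'e \<Rightarrow> 'e \<Rightarrow> bool" where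
  "ind3 u v w \<longleftrightarrow> (\<forall>a b c. a \<cdot> u + b \<cdot> v + c \<cdot> w = 0 \<longrightarrow> a = 0 \<and> b = 0 \<and> c = 0)"

lemma sp1_iff: "w \<in> sp1 v \<longleftrightarrow> (\<exists>a. w = a \<cdot> v)"
  unfolding sp1_def span1_def by auto
lemma sp2_iff: "w \<in> sp2 u v \<longleftrightarrow> (\<exists>a b. w = a \<cdot> u + b \<cdot> v)"
  unfolding sp2_def by auto

lemma sp1_self[simp]: "v \<in> sp1 v" unfolding sp1_iff by (rule exI[of _ 1]) simp
lemma sp1_zero_mem[simp]: "0 \<in> sp1 v" unfolding sp1_iff by (rule exI[of _ 0]) simp
lemma sp1_0[simp]: "sp1 0 = {0}" unfolding sp1_def span1_def by auto
lemma sp1_eq0: "sp1 v = {0} \<longleftrightarrow> v = 0"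
  using sp1_self by (metis singletonD sp1_0)
lemma sp1_smult: "w \<in> sp1 v \<Longrightarrow> a \<cdot> w \<in> sp1 v"
  unfolding sp1_iff by auto
lemma sp1_add: "w \<in> sp1 v \<Longrightarrow> z \<in> sp1 v \<Longrightarrow> w + z \<in> sp1 v"
  unfolding sp1_iff by (auto simp: sc_add[symmetric])
lemma sp1_neg_mem: "w \<in> sp1 v \<Longrightarrow> - w \<in> sp1 v"
  unfolding sp1_iff by (auto intro: exI[of _ "- _"])
lemma sp1_sub: "w \<in> sp1 v \<Longrightarrow> sp1 w \<subseteq> sp1 v"
  using sp1_smult by (auto simp: sp1_iff[of _ w])
lemma sp1_mem_eq: assumes "w \<in> sp1 v" "w \<noteq> 0" shows "sp1 w = sp1 v"
proof -
  obtain a where a: "w = a \<cdot> v" using assms unfolding sp1_iff by auto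
  have "a \<noteq> 0" using a assms by auto
  hence "v = inverse a \<cdot> w" using a by simp
  hence "v \<in> sp1 w" unfolding sp1_iff by auto
  thus ?thesis using sp1_sub assms by blast
qed
lemma sp1_scale: "a \<noteq> 0 \<Longrightarrow> v \<noteq> 0 \<Longrightarrow> sp1 (a \<cdot> v) = sp1 v"
  by (rule sp1_mem_eq) (auto simp: sp1_iff)
lemma sp1_scale': "a \<noteq> 0 \<Longrightarrow> sp1 (a \<cdot> v) = sp1 v"
  by (cases "v = 0") (auto simp: sp1_scale)
lemma sp1_neg[simp]: "sp1 (- v) = sp1 v"
  using sp1_scale'[of "-1" v] by simp

lemma sp2_mem1[simp]: "u \<in> sp2 u v" unfolding sp2_iff by (rule exI[of _ 1], rule exI[of _ 0]) simp
lemma sp2_mem2[simp]: "v \<in> sp2 u v" unfolding sp2_iff by (rule exI[of _ 0], rule exI[of _ 1]) simp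
lemma sp2_zero_mem[simp]: "0 \<in> sp2 u v" unfolding sp2_iff by (rule exI[of _ 0], rule exI[of _ 0]) simp
lemma sp2_add: "w \<in> sp2 u v \<Longrightarrow> z \<in> sp2 u v \<Longrightarrow> w + z \<in> sp2 u v"
  unfolding sp2_iff
proof (elim exE)
  fix a b c d assume "w = a \<cdot> u + b \<cdot> v" "z = c \<cdot> u + d \<cdot> v"
  hence "w + z = (a + c) \<cdot> u + (b + d) \<cdot> v" by (simp add: sc_add algebra_simps)
  thus "\<exists>a b. w + z = a \<cdot> u + b \<cdot> v" by blast
qed
lemma sp2_smult: "w \<in> sp2 u v \<Longrightarrow> c \<cdot> w \<in> sp2 u v"
  unfolding sp2_iff by (metis add_dist sc_assoc)
lemma sp2_neg_mem: "w \<in> sp2 u v \<Longrightarrow> - w \<in> sp2 u v"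
  using sp2_smult[of w u v "-1"] by simp
lemma sp2_diff: "w \<in> sp2 u v \<Longrightarrow> z \<in> sp2 u v \<Longrightarrow> w - z \<in> sp2 u v"
  using sp2_add[of w u v "-z"] sp2_neg_mem by simp
lemma sp2_lc: "w \<in> sp2 u v \<Longrightarrow> z \<in> sp2 u v \<Longrightarrow> a \<cdot> w + b \<cdot> z \<in> sp2 u v"
  by (intro sp2_add sp2_smult)
lemma sp2_sub: "u \<in> sp2 p q \<Longrightarrow> v \<in> sp2 p q \<Longrightarrow> sp2 u v \<subseteq> sp2 p q"
  by (auto simp: sp2_iff[of _ u v] intro: sp2_lc)
lemma sp2_sub1: "u \<in> sp1 z \<Longrightarrow> v \<in> sp1 z \<Longrightarrow> sp2 u v \<subseteq> sp1 z"
  by (auto simp: sp2_iff intro!: sp1_add sp1_smult)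
lemma sp1_sub2: "sp1 u \<subseteq> sp2 u v"
proof
  fix x assume "x \<in> sp1 u"
  then obtain a where "x = a \<cdot> u" by (auto simp: sp1_iff)
  hence "x = a \<cdot> u + 0 \<cdot> v" by simp
  thus "x \<in> sp2 u v" unfolding sp2_iff by blast
qed
lemma sp2_comm: "sp2 u v = sp2 v u"
  by (intro equalityI sp2_sub) auto
lemma sp1_sub2': "sp1 v \<subseteq> sp2 u v"
  using sp1_sub2 sp2_comm by metis
lemma sp2_0[simp]: "sp2 u 0 = sp1 u"
  using sp1_sub2[of u 0] sp2_sub1[of u u 0] by auto
lemma sp2_neg2[simp]: "sp2 u (- v) = sp2 u v"
proof
  show "sp2 u (- v) \<subseteq> sp2 u v" by (intro sp2_sub sp2_neg_mem) auto
  have "v \<in> sp2 u (- v)" using sp2_neg_mem[OF sp2_mem2[of "- v" u]] by simp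
  thus "sp2 u v \<subseteq> sp2 u (- v)" by (intro sp2_sub) auto
qed
lemma sp2_neg1[simp]: "sp2 (- u) v = sp2 u v"
  using sp2_neg2 sp2_comm by metis

lemma ind2_nz: "ind2 u v \<Longrightarrow> u \<noteq> 0 \<and> v \<noteq> 0"
proof
  assume h: "ind2 u v"
  show "u \<noteq> 0"
  proof
    assume "u = 0" hence "1 \<cdot> u + 0 \<cdot> v = 0" by simp
    thus False using h unfolding ind2_def by fastforce
  qed
  show "v \<noteq> 0"
  proof
    assume "v = 0" hence "0 \<cdot> u + 1 \<cdot> v = 0" by simp
    thus False using h unfolding ind2_def by fastforce
  qed
qed
lemma ind2_comm: "ind2 u v \<Longrightarrow> ind2 v u"
  unfolding ind2_def
proof (intro allI impI)
  fix a b assume h: "\<forall>a b. a \<cdot> u + b \<cdot> v = 0 \<longrightarrow> a = 0 \<and> b = 0" and "a \<cdot> v + b \<cdot> u = 0"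
  hence "b \<cdot> u + a \<cdot> v = 0" by (simp add: add.commute)
  thus "a = 0 \<and> b = 0" using h by blast
qed
lemma ind2_iff: "ind2 u v \<longleftrightarrow> u \<noteq> 0 \<and> v \<notin> sp1 u"
proof
  assume h: "ind2 u v"
  show "u \<noteq> 0 \<and> v \<notin> sp1 u"
  proof
    show "u \<noteq> 0" using ind2_nz[OF h] by simp
    show "v \<notin> sp1 u"
    proof
      assume "v \<in> sp1 u"
      then obtain a where "v = a \<cdot> u" by (auto simp: sp1_iff)
      hence "(- a) \<cdot> u + 1 \<cdot> v = 0" by simp
      thus False using h unfolding ind2_def by fastforce
    qed
  qed
next
  assume h: "u \<noteq> 0 \<and> v \<notin> sp1 u"
  show "ind2 u v" unfolding ind2_def
  proof (intro allI impI)
    fix a b assume e: "a \<cdot> u + b \<cdot> v = 0"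
    show "a = 0 \<and> b = 0"
    proof (cases "b = 0")
      case True thus ?thesis using e h by simp
    next
      case False
      have "b \<cdot> v + a \<cdot> u = 0" using e by (simp only: add.commute)
      hence bv: "b \<cdot> v = - (a \<cdot> u)" by (simp only: eq_neg_iff_add_eq_0)
      have "v = inverse b \<cdot> (b \<cdot> v)" using False by simp
      also have "\<dots> = inverse b \<cdot> (- (a \<cdot> u))" by (simp only: bv)
      also have "\<dots> = (- (inverse b * a)) \<cdot> u" by simp
      finally have "v = (- (inverse b * a)) \<cdot> u" .
      hence "v \<in> sp1 u" unfolding sp1_iff by blast
      thus ?thesis using h by simp
    qed
  qed
qed

lemma ind3_iff: "ind3 u v w \<longleftrightarrow> ind2 u v \<and> w \<notin> sp2 u v"
proof
  assume h: "ind3 u v w"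
  have i2: "ind2 u v" unfolding ind2_def
  proof (intro allI impI)
    fix a b assume "a \<cdot> u + b \<cdot> v = 0"
    hence "a \<cdot> u + b \<cdot> v + 0 \<cdot> w = 0" by simp
    thus "a = 0 \<and> b = 0" using h unfolding ind3_def by blast
  qed
  moreover have "w \<notin> sp2 u v"
  proof
    assume "w \<in> sp2 u v"
    then obtain a b where "w = a \<cdot> u + b \<cdot> v" by (auto simp: sp2_iff)
    hence "(- a) \<cdot> u + (- b) \<cdot> v + 1 \<cdot> w = 0" by simp
    thus False using h unfolding ind3_def by fastforce
  qed
  ultimately show "ind2 u v \<and> w \<notin> sp2 u v" by blast
next
  assume h: "ind2 u v \<and> w \<notin> sp2 u v"
  show "ind3 u v w" unfolding ind3_def
  proof (intro allI impI)
    fix a b c assume e: "a \<cdot> u + b \<cdot> v + c \<cdot> w = 0"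
    show "a = 0 \<and> b = 0 \<and> c = 0"
    proof (cases "c = 0")
      case True thus ?thesis using e h unfolding ind2_def by simp
    next
      case False
      have "c \<cdot> w + (a \<cdot> u + b \<cdot> v) = 0" using e by (simp only: add.commute)
      hence cw: "c \<cdot> w = - (a \<cdot> u + b \<cdot> v)" by (simp only: eq_neg_iff_add_eq_0)
      have "w = inverse c \<cdot> (c \<cdot> w)" using False by simp
      also have "\<dots> = inverse c \<cdot> (- (a \<cdot> u + b \<cdot> v))" by (simp only: cw)
      also have "\<dots> = (- (inverse c * a)) \<cdot> u + (- (inverse c * b)) \<cdot> v" by simp
      finally have "w = (- (inverse c * a)) \<cdot> u + (- (inverse c * b)) \<cdot> v" .
      hence "w \<in> sp2 u v" unfolding sp2_iff by blast
      thus ?thesis using h by simp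
    qed
  qed
qed

lemma ind3_lin:
  assumes "ind3 u v w"
    and "\<And>a b c. a \<cdot> X + b \<cdot> Y + c \<cdot> Z = fa a b c \<cdot> u + fb a b c \<cdot> v + fc a b c \<cdot> w"
    and "\<And>a b c. fa a b c = 0 \<Longrightarrow> fb a b c = 0 \<Longrightarrow> fc a b c = 0 \<Longrightarrow> a = 0 \<and> b = 0 \<and> c = 0"
  shows "ind3 X Y Z"
  unfolding ind3_def
proof (intro allI impI)
  fix a b c assume "a \<cdot> X + b \<cdot> Y + c \<cdot> Z = 0"
  hence "fa a b c \<cdot> u + fb a b c \<cdot> v + fc a b c \<cdot> w = 0" using assms(2) by simp
  hence "fa a b c = 0 \<and> fb a b c = 0 \<and> fc a b c = 0" using assms(1) unfolding ind3_def by blast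
  thus "a = 0 \<and> b = 0 \<and> c = 0" using assms(3) by blast
qed

lemma ind3_perm1: assumes "ind3 u v w" shows "ind3 v u w"
  by (rule ind3_lin[OF assms, where fa="\<lambda>a b c. b" and fb="\<lambda>a b c. a" and fc="\<lambda>a b c. c"])
     (simp_all add: add.commute add.left_commute)
lemma ind3_perm2: assumes "ind3 u v w" shows "ind3 u w v"
  by (rule ind3_lin[OF assms, where fa="\<lambda>a b c. a" and fb="\<lambda>a b c. c" and fc="\<lambda>a b c. b"])
     (simp_all add: add.commute add.left_commute add.assoc)
lemma ind3_scale:
  assumes "ind3 u v w" "p \<noteq> 0" "q \<noteq> 0" "r \<noteq> 0"
  shows "ind3 (p \<cdot> u) (q \<cdot> v) (r \<cdot> w)"
  by (rule ind3_lin[OF assms(1), where fa="\<lambda>a b c. a * p" and fb="\<lambda>a b c. b * q" and fc="\<lambda>a b c. c * r"])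
     (simp_all add: assms)
lemma ind3_neg3: "ind3 u v w \<Longrightarrow> ind3 u v (- w)"
  using ind3_scale[of u v w 1 1 "-1"] by simp
lemma ind3_ind2: assumes "ind3 u v w" shows "ind2 u v \<and> ind2 u w \<and> ind2 v w"
proof -
  have "ind3 u w v" "ind3 v w u" using assms ind3_perm1 ind3_perm2 by blast+
  thus ?thesis using assms ind3_iff by blast
qed

lemma plane_sub:
  assumes "ind2 u v" "u \<in> sp2 p q" "v \<in> sp2 p q"
  shows "sp2 p q \<subseteq> sp2 u v"
proof -
  have ex: "p' \<in> sp2 x y" if h1: "x \<in> sp2 p' y" and h2: "x \<notin> sp1 y" for x y p'
  proof -
    obtain a b where ab: "x = a \<cdot> p' + b \<cdot> y" using h1 unfolding sp2_iff by blast
    have "a \<noteq> 0"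
    proof
      assume "a = 0"
      hence "x = b \<cdot> y" using ab by simp
      thus False using h2 unfolding sp1_iff by blast
    qed
    have ap: "a \<cdot> p' = x - b \<cdot> y" using ab by (simp add: eq_diff_eq)
    have "p' = inverse a \<cdot> (a \<cdot> p')" using \<open>a \<noteq> 0\<close> by simp
    also have "\<dots> = inverse a \<cdot> (x - b \<cdot> y)" by (simp only: ap)
    also have "\<dots> = inverse a \<cdot> x + (- (inverse a * b)) \<cdot> y" by simp
    finally have "p' = inverse a \<cdot> x + (- (inverse a * b)) \<cdot> y" .
    thus ?thesis unfolding sp2_iff by blast
  qed
  have u0: "u \<noteq> 0" and vu: "v \<notin> sp1 u" using assms(1) ind2_iff by auto
  show ?thesis
  proof (cases "u \<in> sp1 q")
    case False
    have "p \<in> sp2 u q" using ex[of u p q] assms False by simp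
    hence s1: "sp2 p q \<subseteq> sp2 u q" by (intro sp2_sub) auto
    have "v \<in> sp2 q u" using s1 assms(3) sp2_comm by blast
    hence "q \<in> sp2 v u" using ex[of v q u] vu by simp
    hence "sp2 u q \<subseteq> sp2 u v" using sp2_comm by (intro sp2_sub) auto
    thus ?thesis using s1 by blast
  next
    case True
    have "q \<in> sp1 u" using sp1_mem_eq[OF True u0] by simp
    hence s1: "sp2 p q \<subseteq> sp2 p u" using sp1_sub2'[of u p] by (intro sp2_sub) auto
    have "v \<in> sp2 p u" using s1 assms(3) by blast
    hence "p \<in> sp2 v u" using ex[of v p u] vu by simp
    hence "sp2 p u \<subseteq> sp2 u v" using sp2_comm by (intro sp2_sub) auto
    thus ?thesis using s1 by blast
  qed
qed

lemma three_in_plane: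
  assumes "u \<in> sp2 p q" "v \<in> sp2 p q" "w \<in> sp2 p q" shows "\<not> ind3 u v w"
proof
  assume h: "ind3 u v w"
  hence "ind2 u v" "w \<notin> sp2 u v" using ind3_iff by auto
  thus False using plane_sub[of u v p q] assms by blast
qed

lemma sp1_in_sp2: "w \<in> sp2 u v \<Longrightarrow> sp1 w \<subseteq> sp2 u v"
  using sp2_smult by (auto simp: sp1_iff)

lemma int_lemma:
  assumes "A + B = C + D" "ind3 A B C"
  shows "sp2 A B \<inter> sp2 C D \<subseteq> sp1 (A + B)"
proof
  fix z assume zz: "z \<in> sp2 A B \<inter> sp2 C D"
  hence "z \<in> sp2 A B" by blast
  then obtain a b where z1: "z = a \<cdot> A + b \<cdot> B" unfolding sp2_iff by blast
  have "z \<in> sp2 C D" using zz by blast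
  then obtain c d where z2: "z = c \<cdot> C + d \<cdot> D" unfolding sp2_iff by blast
  have D: "D = A + B - C" using assms(1) by (metis add_diff_cancel_left')
  have "(a - d) \<cdot> A + (b - d) \<cdot> B + (d - c) \<cdot> C = a \<cdot> A + b \<cdot> B - (c \<cdot> C + d \<cdot> D)"
    by (simp only: D sc_diff1 add_dist sc_diff2) (simp add: algebra_simps)
  also have "\<dots> = 0" using z1 z2 by simp
  finally have "a - d = 0 \<and> b - d = 0 \<and> d - c = 0" using assms(2) unfolding ind3_def by blast
  hence "z = a \<cdot> (A + B)" using z1 by simp
  thus "z \<in> sp1 (A + B)" unfolding sp1_iff by blast
qed

end


locale core = lvs +
  fixes Q :: "'x::ab_group_add \<Rightarrow> 'b::ab_group_add set"
  assumes Q0: "Q 0 = {0}"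
    and Qrep: "\<exists>w. Q x = sp1 w"
    and Qneg: "Q (- x) = Q x"
    and Qadd: "Q x = sp1 u \<Longrightarrow> Q y = sp1 v \<Longrightarrow> Q (x + y) \<subseteq> sp2 u v"
    and rank: "\<exists>a b c u v w. Q a = sp1 u \<and> Q b = sp1 v \<and> Q c = sp1 w \<and> ind3 u v w"
begin

definition Rep where "Rep x x' \<longleftrightarrow> Q x = sp1 x'"

lemma rep_ex: "\<exists>x'. Rep x x'" using Qrep unfolding Rep_def by blast
lemma rep_add: "Rep x u \<Longrightarrow> Rep y v \<Longrightarrow> Q (x + y) \<subseteq> sp2 u v"
  unfolding Rep_def by (rule Qadd)
lemma rep_neg: "Rep x u \<Longrightarrow> Rep (- x) (- u)"
  unfolding Rep_def by (simp add: Qneg)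
lemma rep_0: "Rep x 0 \<longleftrightarrow> Q x = {0}"
  unfolding Rep_def by simp
lemma rep_scale: "Rep x u \<Longrightarrow> m \<noteq> 0 \<Longrightarrow> Rep x (m \<cdot> u)"
  unfolding Rep_def by (simp add: sp1_scale')
lemma rep_self: "Rep x u \<Longrightarrow> u \<in> Q x"
  unfolding Rep_def by simp
lemma rep_mem: "Rep x u \<Longrightarrow> p \<in> Q x \<Longrightarrow> p \<noteq> 0 \<Longrightarrow> Rep x p"
  unfolding Rep_def using sp1_mem_eq by metis
lemma rep_eq_sp: "Rep x u \<Longrightarrow> Rep x v \<Longrightarrow> sp1 u = sp1 v"
  unfolding Rep_def by simp
lemma rep_nz_iff: "Rep x u \<Longrightarrow> u \<noteq> 0 \<longleftrightarrow> Q x \<noteq> {0}"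
  unfolding Rep_def using sp1_eq0 by metis

lemma rep_nz:
  assumes "Rep x u" "Rep y v" "ind2 u v" shows "Q (x + y) \<noteq> {0}"
proof
  assume h: "Q (x + y) = {0}"
  have "Rep (x + y) 0" using h rep_0 by simp
  moreover have "Rep (- y) (- v)" using assms(2) rep_neg by blast
  ultimately have "Q (x + y + - y) \<subseteq> sp2 0 (- v)" by (rule rep_add)
  hence "Q x \<subseteq> sp1 v" using sp2_comm[of 0 v] by simp
  hence "v \<noteq> 0 \<and> u \<in> sp1 v" using assms rep_self ind2_nz by blast
  thus False using assms(3) ind2_comm ind2_iff by blast
qed

lemma rep_of_sub: assumes "Q s \<subseteq> sp1 w" "Q s \<noteq> {0}" shows "Rep s w"
proof -
  obtain z where z: "Rep s z" using rep_ex by blast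
  hence "z \<noteq> 0" using assms(2) rep_nz_iff by blast
  moreover have "z \<in> sp1 w" using z assms(1) rep_self by blast
  ultimately have "sp1 z = sp1 w" using sp1_mem_eq by blast
  thus ?thesis using z unfolding Rep_def by simp
qed

lemma rep_two:
  assumes "s = p1 + q1" "s = p2 + q2" "Rep p1 A" "Rep q1 B" "Rep p2 C" "Rep q2 D"
    "A + B = C + D" "ind3 A B C" "S = A + B"
  shows "Rep s S"
proof (rule rep_of_sub)
  have "Q s \<subseteq> sp2 A B" using assms(1,3,4) rep_add by blast
  moreover have "Q s \<subseteq> sp2 C D" using assms(2,5,6) rep_add by blast
  ultimately show "Q s \<subseteq> sp1 S" using int_lemma[OF assms(7,8)] assms(9) by blast
  have "ind2 A B" using assms(8) ind3_ind2 by blast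
  thus "Q s \<noteq> {0}" using rep_nz assms(1,3,4) by blast
qed

lemma QK: assumes "Q n = {0}" shows "Q (x + n) = Q x"
proof -
  obtain u where u: "Rep x u" using rep_ex by blast
  obtain w where w: "Rep (x + n) w" using rep_ex by blast
  have n0: "Rep n 0" "Rep (- n) 0" using assms rep_0 Qneg by auto
  have "Q (x + n) \<subseteq> sp2 u 0" using rep_add[OF u n0(1)] .
  hence 1: "Q (x + n) \<subseteq> Q x" using u unfolding Rep_def by simp
  have "Q (x + n + - n) \<subseteq> sp2 w 0" using rep_add[OF w n0(2)] .
  hence "Q x \<subseteq> Q (x + n)" using w unfolding Rep_def by simp
  thus ?thesis using 1 by blast
qed

lemma two_in_line: assumes "ind2 p q" "p \<in> sp1 w" "q \<in> sp1 w" shows False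
proof -
  have "p \<noteq> 0" "q \<notin> sp1 p" using assms(1) ind2_iff by auto
  moreover have "sp1 p = sp1 w" using assms(2) \<open>p \<noteq> 0\<close> sp1_mem_eq by blast
  ultimately show False using assms(3) by blast
qed

lemma three_pts:
  assumes "u + v + w = 0" "p \<in> Q u" "q \<in> Q v" "r \<in> Q w" "ind3 p q r"
  shows False
proof -
  have i: "ind2 p q" "p \<noteq> 0" "q \<noteq> 0" using assms(5) ind3_ind2 ind2_nz by blast+
  obtain u' where "Rep u u'" using rep_ex by blast
  hence ru: "Rep u p" using rep_mem assms(2) i by blast
  obtain v' where "Rep v v'" using rep_ex by blast
  hence rv: "Rep v q" using rep_mem assms(3) i by blast
  have "w + (u + v) = 0" using assms(1) by (simp add: add_ac)
  hence "w = - (u + v)" by (simp only: eq_neg_iff_add_eq_0)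
  hence "Q w = Q (u + v)" using Qneg[of "u + v"] by (simp only:)
  hence "r \<in> sp2 p q" using rep_add[OF ru rv] assms(4) by blast
  thus False using assms(5) ind3_iff by blast
qed

end

locale base = core +
  fixes a a'
  assumes Ra: "Rep a a'" and anz: "a' \<noteq> 0"
begin

definition D where "D x \<longleftrightarrow> a' \<notin> Q x"
definition h where "h x = (THE x'. Rep x x' \<and> Rep (a + x) (a' + x'))"

lemma D_iff: assumes "Rep x x'" shows "D x \<longleftrightarrow> x' = 0 \<or> ind2 a' x'"
proof (cases "x' = 0")
  case True thus ?thesis using assms anz unfolding D_def Rep_def by simp
next
  case False
  have "D x \<longleftrightarrow> a' \<notin> sp1 x'" using assms unfolding D_def Rep_def by simp
  also have "\<dots> \<longleftrightarrow> ind2 x' a'" using False ind2_iff by simp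
  also have "\<dots> \<longleftrightarrow> ind2 a' x'" using ind2_comm by blast
  finally show ?thesis using False by simp
qed

lemma not_Da: "\<not> D a" using Ra rep_self unfolding D_def by blast

lemma E_ex: assumes "D x" shows "\<exists>x'. Rep x x' \<and> Rep (a + x) (a' + x')"
proof -
  obtain x'' where x'': "Rep x x''" using rep_ex by blast
  show ?thesis
  proof (cases "x'' = 0")
    case True
    have "Q (a + x) \<subseteq> sp2 a' 0" using rep_add[OF Ra] x'' True by blast
    hence s: "Q (a + x) \<subseteq> sp1 a'" by simp
    have "Q (a + x) \<noteq> {0}"
    proof
      assume "Q (a + x) = {0}"
      hence "Rep (a + x) 0" by (simp add: rep_0)
      moreover have "Rep (- x) (- 0)" using rep_neg x'' True by blast
      ultimately have "Q (a + x + - x) \<subseteq> sp2 0 (- 0)" by (rule rep_add)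
      hence "Q a \<subseteq> {0}" by simp
      thus False using Ra anz rep_self by blast
    qed
    hence "Rep (a + x) a'" using s rep_of_sub by blast
    thus ?thesis using x'' True by (intro exI[of _ 0]) simp
  next
    case False
    have i2: "ind2 a' x''" using assms D_iff x'' False by blast
    have nz: "Q (a + x) \<noteq> {0}" using rep_nz[OF Ra x'' i2] .
    obtain w where w: "Rep (a + x) w" using rep_ex by blast
    have w0: "w \<noteq> 0" using w nz rep_nz_iff by blast
    have "w \<in> sp2 a' x''" using rep_add[OF Ra x''] rep_self[OF w] by blast
    then obtain p q where pq: "w = p \<cdot> a' + q \<cdot> x''" unfolding sp2_iff by blast
    have p0: "p \<noteq> 0"
    proof
      assume "p = 0"
      hence "Rep (a + x) (q \<cdot> x'')" using w pq by simp
      moreover have "Rep (- x) (- x'')" using rep_neg x'' by blast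
      ultimately have "Q (a + x + - x) \<subseteq> sp2 (q \<cdot> x'') (- x'')" by (rule rep_add)
      moreover have "sp2 (q \<cdot> x'') (- x'') \<subseteq> sp1 x''"
        by (rule sp2_sub1) (auto simp: sp1_iff intro: exI[of _ "-1"])
      ultimately have "a' \<in> sp1 x''" using Ra rep_self by auto
      thus False using i2 ind2_comm ind2_iff by blast
    qed
    have q0: "q \<noteq> 0"
    proof
      assume "q = 0"
      hence "Rep (a + x) (p \<cdot> a')" using w pq by simp
      moreover have "Rep (- a) (- a')" using rep_neg Ra by blast
      ultimately have "Q (a + x + - a) \<subseteq> sp2 (p \<cdot> a') (- a')" by (rule rep_add)
      moreover have "sp2 (p \<cdot> a') (- a') \<subseteq> sp1 a'"
        by (rule sp2_sub1) (auto simp: sp1_iff intro: exI[of _ "-1"])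
      moreover have "a + x + - a = x" by (simp add: algebra_simps)
      ultimately have "x'' \<in> sp1 a'" using x'' rep_self by auto
      thus False using i2 ind2_iff by blast
    qed
    define x' where "x' = (inverse p * q) \<cdot> x''"
    have "Rep x x'" unfolding x'_def using x'' p0 q0 by (intro rep_scale) auto
    moreover have "Rep (a + x) (inverse p \<cdot> w)" using w p0 by (intro rep_scale) auto
    moreover have "inverse p \<cdot> w = a' + x'" using p0 unfolding pq x'_def by simp
    ultimately show ?thesis by auto
  qed
qed

lemma E_uniq:
  assumes "D x" "Rep x x1" "Rep (a + x) (a' + x1)" "Rep x x2" "Rep (a + x) (a' + x2)"
  shows "x1 = x2"
proof (cases "x1 = 0")
  case True
  thus ?thesis using assms(2,4) unfolding Rep_def by (simp add: sp1_eq0)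
next
  case False
  have i2: "ind2 a' x1" using assms(1,2) D_iff False by blast
  have "x2 \<in> Q x" by (rule rep_self[OF assms(4)])
  hence "x2 \<in> sp1 x1" using assms(2) unfolding Rep_def by simp
  then obtain m where m: "x2 = m \<cdot> x1" unfolding sp1_iff by blast
  have "a' + x2 \<in> Q (a + x)" by (rule rep_self[OF assms(5)])
  hence "a' + x2 \<in> sp1 (a' + x1)" using assms(3) unfolding Rep_def by simp
  then obtain n where n: "a' + x2 = n \<cdot> (a' + x1)" unfolding sp1_iff by blast
  have "(1 - n) \<cdot> a' + (m - n) \<cdot> x1 = (a' + x2) - n \<cdot> (a' + x1)"
    by (simp add: m sc_diff1 algebra_simps)
  also have "\<dots> = 0" using n by simp
  finally have "1 - n = 0 \<and> m - n = 0" using i2 unfolding ind2_def by blast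
  thus ?thesis using m by simp
qed

lemma hP: assumes "D x" shows "Rep x (h x) \<and> Rep (a + x) (a' + h x)"
proof -
  obtain x' where x': "Rep x x' \<and> Rep (a + x) (a' + x')" using E_ex[OF assms] by blast
  have "h x = x'" unfolding h_def
    by (rule the_equality) (use x' E_uniq[OF assms] in blast)+
  thus ?thesis using x' by simp
qed

lemma hI: assumes "D x" "Rep x x'" "Rep (a + x) (a' + x')" shows "h x = x'"
  using hP[OF assms(1)] E_uniq[OF assms(1)] assms(2,3) by blast

lemma hker: assumes "Q n = {0}" shows "D n \<and> h n = 0"
proof -
  have D: "D n" using assms anz unfolding D_def by simp
  have "Rep n 0" using assms rep_0 by simp
  moreover have "Rep (a + n) (a' + 0)" using QK[OF assms, of a] Ra unfolding Rep_def by simp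
  ultimately show ?thesis using hI[OF D] D by blast
qed

lemma h_nz: assumes "D x" "Q x \<noteq> {0}" shows "h x \<noteq> 0 \<and> ind2 a' (h x)"
proof -
  have r: "Rep x (h x)" using hP[OF assms(1)] by blast
  hence "h x \<noteq> 0" using assms(2) rep_nz_iff by blast
  thus ?thesis using D_iff[OF r] assms(1) by blast
qed

lemma h_zero: assumes "D x" "Q x = {0}" shows "h x = 0"
  using hker[OF assms(2)] by blast

lemma hK: assumes "Q n = {0}" "D y" shows "D (y + n) \<and> h (y + n) = h y"
proof -
  have q: "Q (y + n) = Q y" using QK[OF assms(1)] .
  have D: "D (y + n)" using assms(2) q unfolding D_def by simp
  have "Rep (y + n) (h y)" using hP[OF assms(2)] q unfolding Rep_def by simp
  moreover have "Rep (a + (y + n)) (a' + h y)"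
    using hP[OF assms(2)] QK[OF assms(1), of "a + y"] unfolding Rep_def by (simp add: add.assoc)
  ultimately show ?thesis using hI[OF D] D by blast
qed

lemma gen:
  assumes "a' \<in> sp2 u v"
  shows "\<exists>c. D c \<and> h c \<notin> sp2 u v"
proof -
  obtain c1 c2 c3 w1 w2 w3 where w: "Rep c1 w1" "Rep c2 w2" "Rep c3 w3" "ind3 w1 w2 w3"
    using rank unfolding Rep_def by blast
  have "\<exists>c w. Rep c w \<and> w \<notin> sp2 u v"
    using three_in_plane[of w1 u v w2 w3] w by blast
  then obtain c w where cw: "Rep c w" "w \<notin> sp2 u v" by blast
  have w0: "w \<noteq> 0" using cw(2) by auto
  have Dc: "D c" unfolding D_def
  proof
    assume "a' \<in> Q c"
    hence "sp1 a' = sp1 w" using cw(1) anz sp1_mem_eq unfolding Rep_def by simp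
    hence "w \<in> sp1 a'" by simp
    moreover have "sp1 a' \<subseteq> sp2 u v" using assms by (rule sp1_in_sp2)
    ultimately show False using cw(2) by blast
  qed
  hence hr: "Rep c (h c)" using hP by blast
  have "w \<in> sp1 (h c)" using rep_eq_sp[OF hr cw(1)] by simp
  moreover have "h c \<in> sp2 u v \<Longrightarrow> sp1 (h c) \<subseteq> sp2 u v"
    by (rule sp1_in_sp2)
  ultimately show ?thesis using Dc cw(2) by blast
qed

end


context lvs
begin

lemma T1: assumes "ind3 u v w" shows "ind3 (u + v) (- (u + w)) v"
  by (rule ind3_lin[OF assms, where fa="\<lambda>a b c. a - b" and fb="\<lambda>a b c. a + c" and fc="\<lambda>a b c. - b"])
     (simp_all add: sc_add sc_diff1 algebra_simps)
lemma T2: assumes "ind3 u v w" shows "ind3 (u + v) (- w) u"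
  by (rule ind3_lin[OF assms, where fa="\<lambda>a b c. a + c" and fb="\<lambda>a b c. a" and fc="\<lambda>a b c. - b"])
     (simp_all add: sc_add sc_diff1 algebra_simps)
lemma T3: assumes "ind3 u v w" shows "ind3 (u + (v - w)) (- v) u"
  by (rule ind3_lin[OF assms, where fa="\<lambda>a b c. a + c" and fb="\<lambda>a b c. a - b" and fc="\<lambda>a b c. - a"])
     (simp_all add: sc_add sc_diff1 algebra_simps)
lemma T4: assumes "ind3 u v w" shows "ind3 (u + v) (- (u + - w)) v"
  by (rule ind3_lin[OF assms, where fa="\<lambda>a b c. a - b" and fb="\<lambda>a b c. a + c" and fc="\<lambda>a b c. b"])
     (simp_all add: sc_add sc_diff1 algebra_simps)
lemma T5: assumes "ind3 u v w" shows "ind3 (u + v) w u"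
  by (rule ind3_lin[OF assms, where fa="\<lambda>a b c. a + c" and fb="\<lambda>a b c. a" and fc="\<lambda>a b c. b"])
     (simp_all add: sc_add sc_diff1 algebra_simps)
lemma T6: assumes "ind3 u v w" shows "ind3 (u + w) (v + - w) u"
  by (rule ind3_lin[OF assms, where fa="\<lambda>a b c. a + c" and fb="\<lambda>a b c. b" and fc="\<lambda>a b c. a - b"])
     (simp_all add: sc_add sc_diff1 algebra_simps)
lemma T7: assumes "ind3 u (x + y) (x + c)" shows "ind3 u (x + c) (y + - c)"
  by (rule ind3_lin[OF assms, where fa="\<lambda>a b c. a" and fb="\<lambda>a b c. c" and fc="\<lambda>a b c. b - c"])
     (simp_all add: sc_add sc_diff1 algebra_simps)

lemma ind3_rot: "ind3 u v w \<Longrightarrow> ind3 v w u"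
  using ind3_perm1 ind3_perm2 by blast
lemma ind3_ext:
  assumes "ind2 p q" "p \<in> sp2 x y" "q \<in> sp2 x y" "w \<notin> sp2 x y" shows "ind3 p q w"
  using assms plane_sub[OF assms(1)] sp2_sub[OF assms(2,3)] ind3_iff by blast
lemma ind2_sum: assumes "ind3 u v w" shows "ind2 u (v + w)"
proof -
  have "ind3 u (v + w) w"
    by (rule ind3_lin[OF assms, where fa="\<lambda>a b c. a" and fb="\<lambda>a b c. b" and fc="\<lambda>a b c. b + c"])
       (simp_all add: sc_add algebra_simps)
  thus ?thesis using ind3_ind2 by blast
qed
lemma ind2_sum_nz: assumes "ind2 u v" shows "u + v \<noteq> 0"
proof
  assume "u + v = 0" hence "1 \<cdot> u + 1 \<cdot> v = 0" by simp
  thus False using assms unfolding ind2_def by fastforce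
qed
lemma ind2_add_self: assumes "ind2 u w" shows "ind2 u (u + w)"
  unfolding ind2_def
proof (intro allI impI)
  fix a b assume "a \<cdot> u + b \<cdot> (u + w) = 0"
  hence "(a + b) \<cdot> u + b \<cdot> w = 0" by (simp add: sc_add algebra_simps)
  hence "a + b = 0 \<and> b = 0" using assms unfolding ind2_def by blast
  thus "a = 0 \<and> b = 0" by (metis add.right_neutral)
qed
lemma ind2_mix: assumes "ind2 u w" "1 + m \<noteq> 0" shows "ind2 (u + w) (m \<cdot> u + - w)"
  unfolding ind2_def
proof (intro allI impI)
  fix a b assume "a \<cdot> (u + w) + b \<cdot> (m \<cdot> u + - w) = 0"
  hence "(a + b * m) \<cdot> u + (a - b) \<cdot> w = 0" by (simp add: sc_add sc_diff1 algebra_simps)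
  hence h: "a + b * m = 0 \<and> a - b = 0" using assms unfolding ind2_def by blast
  hence "b = a" by simp
  hence "a * (1 + m) = 0" using h by (simp add: algebra_simps)
  hence "a = 0" using assms(2) by simp
  thus "a = 0 \<and> b = 0" using \<open>b = a\<close> by simp
qed
lemma not_ind2: "\<not> ind2 u v \<Longrightarrow> u \<noteq> 0 \<Longrightarrow> v \<in> sp1 u"
  using ind2_iff by blast
lemma not_ind3: "\<not> ind3 u v w \<Longrightarrow> ind2 u v \<Longrightarrow> w \<in> sp2 u v"
  using ind3_iff by blast

end

context base
begin

lemma NEG: assumes "D y" shows "D (- y) \<and> h (- y) = - h y"
proof -
  have Dn: "D (- y)" using assms Qneg unfolding D_def by simp
  show ?thesis
  proof (cases "Q y = {0}")
    case True
    hence "Q (- y) = {0}" using Qneg by simp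
    thus ?thesis using h_zero[OF assms True] h_zero[OF Dn] Dn by simp
  next
    case False
    define y' where "y' = h y"
    have ry: "Rep y y'" and ray: "Rep (a + y) (a' + y')" using hP[OF assms] y'_def by auto
    have i2: "ind2 a' y'" using h_nz[OF assms False] y'_def by simp
    obtain c where Dc: "D c" and cn: "h c \<notin> sp2 a' y'" using gen[of a' y'] by auto
    define c' where "c' = h c"
    have rc: "Rep c c'" and rac: "Rep (a + c) (a' + c')" using hP[OF Dc] c'_def by auto
    have "ind3 a' y' c'" using i2 cn c'_def ind3_iff by blast
    hence i3: "ind3 a' c' y'" using ind3_perm2 by blast
    have s1: "Rep (c - y) (c' - y')"
      by (rule rep_two[OF _ _ rac rep_neg[OF ray] rc rep_neg[OF ry] _ T1[OF i3]]) (simp_all add: algebra_simps)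
    have s2: "Rep (a + (c - y)) (a' + (c' - y'))"
      by (rule rep_two[OF _ _ rac rep_neg[OF ry] Ra s1 _ T2[OF i3]]) (simp_all add: algebra_simps)
    have s3: "Rep (a + - y) (a' + - y')"
      by (rule rep_two[OF _ _ s2 rep_neg[OF rc] Ra rep_neg[OF ry] _ T3[OF i3]]) (simp_all add: algebra_simps)
    have "h (- y) = - y'" by (rule hI[OF Dn rep_neg[OF ry] s3])
    thus ?thesis using Dn y'_def by simp
  qed
qed

lemma ADD1: assumes "D x" "D y" "ind3 a' (h x) (h y)" shows "D (x + y) \<and> h (x + y) = h x + h y"
proof -
  define x' y' where "x' = h x" and "y' = h y"
  have rx: "Rep x x'" and rax: "Rep (a + x) (a' + x')" using hP[OF assms(1)] x'_def by auto
  have ry: "Rep y y'" and ray: "Rep (a + y) (a' + y')" using hP[OF assms(2)] y'_def by auto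
  have i3: "ind3 a' x' y'" using assms(3) x'_def y'_def by simp
  have ramy: "Rep (a + - y) (a' + - y')" using hP[of "- y"] NEG[OF assms(2)] y'_def by auto
  have s1: "Rep (x + y) (x' + y')"
    by (rule rep_two[OF _ _ rax rep_neg[OF ramy] rx ry _ T4[OF i3]]) (simp_all add: algebra_simps)
  have "ind2 x' y'" using i3 ind3_ind2 by blast
  hence nz: "x' + y' \<noteq> 0" by (rule ind2_sum_nz)
  have "ind2 a' (x' + y')" using ind2_sum[OF i3] .
  hence Dxy: "D (x + y)" using D_iff[OF s1] by blast
  have s2: "Rep (a + (x + y)) (a' + (x' + y'))"
    by (rule rep_two[OF _ _ rax ry Ra s1 _ T5[OF i3]]) (simp_all add: algebra_simps)
  show ?thesis using hI[OF Dxy s1 s2] Dxy x'_def y'_def by simp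
qed

lemma D_rep_nz: assumes "D x" "h x \<noteq> 0" shows "ind2 a' (h x)"
  using D_iff[of x "h x"] hP[OF assms(1)] assms by blast

lemma ADD12: assumes "D x" "D y" "D (x + y)" "ind2 (h x) (h y)" shows "h (x + y) = h x + h y"
proof (cases "ind3 a' (h x) (h y)")
  case True thus ?thesis using ADD1 assms by blast
next
  case False
  define x' y' where "x' = h x" and "y' = h y"
  have rx: "Rep x x'" using hP[OF assms(1)] x'_def by auto
  have ry: "Rep y y'" using hP[OF assms(2)] y'_def by auto
  have i2: "ind2 x' y'" using assms(4) x'_def y'_def by simp
  have x0: "x' \<noteq> 0" "y' \<noteq> 0" using i2 ind2_nz by auto
  have ax: "ind2 a' x'" using D_rep_nz[OF assms(1)] x0 x'_def by simp
  have ay: "ind2 a' y'" using D_rep_nz[OF assms(2)] x0 y'_def by simp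
  have "\<not> ind3 x' y' a'" using False x'_def y'_def ind3_rot by blast
  hence apl: "a' \<in> sp2 x' y'" using not_ind3 i2 by blast
  obtain c where Dc: "D c" and cn: "h c \<notin> sp2 x' y'" using gen[OF apl] by auto
  define c' where "c' = h c"
  have cn': "c' \<notin> sp2 x' y'" using cn c'_def by simp
  have i3: "ind3 x' y' c'" using i2 cn' ind3_iff by blast
  have i3x: "ind3 a' x' c'" using ind3_ext[OF ax apl _ cn'] by simp
  have "- c' \<notin> sp2 x' y'" using cn' sp2_neg_mem by fastforce
  hence i3y: "ind3 a' y' (- c')" using ind3_ext[OF ay apl] by simp
  have Dmc: "D (- c)" and hmc: "h (- c) = - c'" using NEG[OF Dc] c'_def by auto
  have A1: "D (x + c)" "h (x + c) = x' + c'" using ADD1[OF assms(1) Dc] i3x x'_def c'_def by auto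
  have A2: "D (y + - c)" "h (y + - c) = y' + - c'" using ADD1[OF assms(2) Dmc] i3y y'_def hmc by auto
  have r1: "Rep (x + c) (x' + c')" using hP[OF A1(1)] A1(2) by simp
  have r2: "Rep (y + - c) (y' + - c')" using hP[OF A2(1)] A2(2) by simp
  have rxy: "Rep (x + y) (x' + y')"
    by (rule rep_two[OF _ _ r1 r2 rx ry _ T6[OF i3]]) (simp_all add: algebra_simps)
  have "ind2 a' (x' + y')" using D_iff[OF rxy] assms(3) ind2_sum_nz[OF i2] by blast
  moreover have "x' + y' \<in> sp2 x' y'" by (intro sp2_add) auto
  moreover have "x' + c' \<notin> sp2 x' y'"
  proof
    assume "x' + c' \<in> sp2 x' y'"
    hence "x' + c' - x' \<in> sp2 x' y'" by (intro sp2_diff) auto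
    thus False using cn' by simp
  qed
  ultimately have "ind3 a' (x' + y') (x' + c')" using ind3_ext[OF _ apl] by blast
  hence "ind3 a' (x' + c') (y' + - c')" by (rule T7)
  hence "ind3 a' (h (x + c)) (h (y + - c))" using A1 A2 by simp
  hence "h (x + c + (y + - c)) = h (x + c) + h (y + - c)" using ADD1[OF A1(1) A2(1)] by blast
  moreover have "x + c + (y + - c) = x + y" by (simp add: algebra_simps)
  ultimately show ?thesis using A1 A2 x'_def y'_def by (simp add: algebra_simps)
qed

lemma ADD3: assumes "D x" "D y" "h x \<noteq> 0" "h y \<noteq> 0" "h y \<in> sp1 (h x)"
  shows "D (x + y) \<and> h (x + y) = h x + h y"
proof -
  define x' y' where "x' = h x" and "y' = h y"
  have rx: "Rep x x'" using hP[OF assms(1)] x'_def by auto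
  have ry: "Rep y y'" using hP[OF assms(2)] y'_def by auto
  obtain m where m: "y' = m \<cdot> x'" using assms(5) x'_def y'_def unfolding sp1_iff by blast
  have ax: "ind2 a' x'" using D_rep_nz[OF assms(1,3)] x'_def by simp
  have ay: "ind2 a' y'" using D_rep_nz[OF assms(2,4)] y'_def by simp
  have "Q (x + y) \<subseteq> sp2 x' y'" by (rule rep_add[OF rx ry])
  also have "\<dots> \<subseteq> sp1 x'" using assms(5) x'_def y'_def by (intro sp2_sub1) auto
  finally have Qxy: "Q (x + y) \<subseteq> sp1 x'" .
  have "a' \<notin> sp1 x'" using assms(1) rx unfolding D_def Rep_def by simp
  hence Dxy: "D (x + y)" using Qxy unfolding D_def by blast
  have apl: "a' \<in> sp2 a' x'" by simp
  obtain c where Dc: "D c" and cn: "h c \<notin> sp2 a' x'" using gen[OF apl] by auto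
  define c' where "c' = h c"
  have cn': "c' \<notin> sp2 a' x'" using cn c'_def by simp
  have i3x: "ind3 a' x' c'" using ax cn' ind3_iff by blast
  have ypl: "y' \<in> sp2 a' x'" using assms(5) x'_def y'_def sp1_sub2'[of x' a'] by blast
  have i3y: "ind3 a' y' (- c')" using ind3_ext[OF ay apl ypl] cn' sp2_neg_mem by fastforce
  have Dmc: "D (- c)" and hmc: "h (- c) = - c'" using NEG[OF Dc] c'_def by auto
  have A1: "D (x + c)" "h (x + c) = x' + c'" using ADD1[OF assms(1) Dc] i3x x'_def c'_def by auto
  have A2: "D (y + - c)" "h (y + - c) = y' + - c'" using ADD1[OF assms(2) Dmc] i3y y'_def hmc by auto
  have r1: "Rep (x + c) (x' + c')" using hP[OF A1(1)] A1(2) by simp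
  have r2: "Rep (y + - c) (y' + - c')" using hP[OF A2(1)] A2(2) by simp
  have xc: "ind2 x' c'" using i3x ind3_ind2 by blast
  have eq: "x + c + (y + - c) = x + y" by (simp add: algebra_simps)
  show ?thesis
  proof (cases "x' + y' = 0")
    case False
    have "x' + y' = (1 + m) \<cdot> x'" using m by (simp add: sc_add)
    hence "1 + m \<noteq> 0" using False by auto
    hence "ind2 (x' + c') (y' + - c')" using ind2_mix[OF xc] m by simp
    hence "ind2 (h (x + c)) (h (y + - c))" using A1 A2 by simp
    hence "h (x + c + (y + - c)) = h (x + c) + h (y + - c)" using ADD12[OF A1(1) A2(1)] Dxy eq by simp
    thus ?thesis using eq A1 A2 Dxy x'_def y'_def by (simp add: algebra_simps)
  next
    case True
    have "y' + - c' = - (x' + c')" using True by (simp add: add_eq_0_iff2 algebra_simps)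
    hence "Q (x + y) \<subseteq> sp2 (x' + c') (- (x' + c'))" using rep_add[OF r1 r2] eq by simp
    also have "\<dots> \<subseteq> sp1 (x' + c')" by (intro sp2_sub1 sp1_neg_mem sp1_self)
    finally have Q2: "Q (x + y) \<subseteq> sp1 (x' + c')" .
    have i2': "ind2 x' (x' + c')" using ind2_add_self[OF xc] .
    have "Q (x + y) \<subseteq> {0}"
    proof
      fix z assume z: "z \<in> Q (x + y)"
      show "z \<in> {0}"
      proof (rule ccontr)
        assume "z \<notin> {0}"
        hence z0: "z \<noteq> 0" by simp
        have "sp1 z = sp1 x'" using sp1_mem_eq z0 z Qxy by blast
        moreover have "sp1 z = sp1 (x' + c')" using sp1_mem_eq z0 z Q2 by blast
        ultimately have "x' \<in> sp1 z" "x' + c' \<in> sp1 z" using sp1_self by blast+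
        thus False using two_in_line[OF i2'] by blast
      qed
    qed
    moreover have "0 \<in> Q (x + y)" using rep_ex[of "x + y"] unfolding Rep_def by auto
    ultimately have "Q (x + y) = {0}" by blast
    hence "h (x + y) = 0" using h_zero Dxy by blast
    thus ?thesis using Dxy True x'_def y'_def by simp
  qed
qed

lemma ADD: assumes "D x" "D y" "D (x + y)" shows "h (x + y) = h x + h y"
proof (cases "Q x = {0}")
  case True
  have "h (y + x) = h y" using hK[OF True assms(2)] by blast
  thus ?thesis using h_zero[OF assms(1) True] by (simp add: add.commute)
next
  case F1: False
  show ?thesis
  proof (cases "Q y = {0}")
    case True
    thus ?thesis using hK[OF True assms(1)] h_zero[OF assms(2) True] by simp
  next
    case False
    have x0: "h x \<noteq> 0" using h_nz[OF assms(1) F1] by blast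
    have y0: "h y \<noteq> 0" using h_nz[OF assms(2) False] by blast
    show ?thesis
    proof (cases "ind2 (h x) (h y)")
      case True thus ?thesis using ADD12 assms by blast
    next
      case False
      hence "h y \<in> sp1 (h x)" using not_ind2 x0 by blast
      thus ?thesis using ADD3 assms x0 y0 by blast
    qed
  qed
qed

end


context core
begin

lemma base_intro: assumes "Rep a a'" "a' \<noteq> 0" shows "base sc Q a a'"
  by (intro base.intro base_axioms.intro assms) unfold_locales

lemma transfer:
  assumes A: "base sc Q a a'" and Db: "base.D Q a' b" and bnz: "base.h sc Q a a' b \<noteq> 0"
    and Dax: "base.D Q a' x" and Dbx: "base.D Q (base.h sc Q a a' b) x"
  shows "base.h sc Q b (base.h sc Q a a' b) x = base.h sc Q a a' x"
proof -
  interpret A: base sc Q a a' by (rule A)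
  define b' where "b' = A.h b"
  have rb: "Rep b b'" "Rep (a + b) (a' + b')" using A.hP[OF Db] b'_def by auto
  have b0: "b' \<noteq> 0" using bnz b'_def by simp
  interpret B: base sc Q b b' by (rule base_intro[OF rb(1) b0])
  have Dbx': "B.D x" using Dbx b'_def by simp
  have TR0: "B.h z = A.h z" if z1: "A.D z" and z2: "B.D z" and z3: "ind3 a' b' (A.h z)" for z
  proof -
    define z' where "z' = A.h z"
    have rz: "Rep z z'" using A.hP[OF z1] z'_def by auto
    have ramz: "Rep (a + - z) (a' + - z')" using A.hP[of "- z"] A.NEG[OF z1] z'_def by auto
    have i3: "ind3 a' b' z'" using z3 z'_def by simp
    have "Rep (b + z) (b' + z')"
      by (rule rep_two[OF _ _ rb(2) rep_neg[OF ramz] rb(1) rz _ T4[OF i3]]) (simp_all add: algebra_simps)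
    thus ?thesis using B.hI[OF z2 rz] z'_def by simp
  qed
  have "B.h x = A.h x"
  proof (cases "Q x = {0}")
    case True
    thus ?thesis using A.h_zero[OF Dax True] B.h_zero[OF Dbx' True] by simp
  next
    case False
    define x' where "x' = A.h x"
    have x0: "x' \<noteq> 0" and ax: "ind2 a' x'" using A.h_nz[OF Dax False] x'_def by auto
    have rx: "Rep x x'" using A.hP[OF Dax] x'_def by auto
    show ?thesis
    proof (cases "ind3 a' b' x'")
      case True thus ?thesis using TR0[OF Dax Dbx'] x'_def by simp
    next
      case False
      have ab: "ind2 a' b'" using A.D_rep_nz[OF Db bnz] b'_def by simp
      have xpl: "x' \<in> sp2 a' b'" using not_ind3[OF False ab] .
      have apl: "a' \<in> sp2 a' b'" by simp
      obtain c where Dc: "A.D c" and cn: "A.h c \<notin> sp2 a' b'" using A.gen[OF apl] by auto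
      define c' where "c' = A.h c"
      have cn': "c' \<notin> sp2 a' b'" using cn c'_def by simp
      have rc: "Rep c c'" using A.hP[OF Dc] c'_def by auto
      have i3x: "ind3 a' x' c'" using ind3_ext[OF ax apl xpl cn'] .
      have A1: "A.D (x + c)" "A.h (x + c) = x' + c'" using A.ADD1[OF Dax Dc] i3x x'_def c'_def by auto
      have rxc: "Rep (x + c) (x' + c')" using A.hP[OF A1(1)] A1(2) by simp
      have "x' + c' \<notin> sp2 a' b'"
      proof
        assume "x' + c' \<in> sp2 a' b'"
        hence "x' + c' - x' \<in> sp2 a' b'" using xpl by (intro sp2_diff)
        thus False using cn' by simp
      qed
      hence i3xc: "ind3 a' b' (x' + c')" using ab ind3_iff by blast
      have i3c: "ind3 a' b' c'" using ab cn' ind3_iff by blast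
      have "ind2 b' (x' + c')" using i3xc ind3_ind2 by blast
      hence Dxc: "B.D (x + c)" using B.D_iff[OF rxc] by blast
      have "ind2 b' c'" using i3c ind3_ind2 by blast
      hence Dc': "B.D c" using B.D_iff[OF rc] by blast
      have h1: "B.h (x + c) = x' + c'" using TR0[OF A1(1) Dxc] i3xc A1(2) by simp
      have h2: "B.h c = c'" using TR0[OF Dc Dc'] i3c c'_def by simp
      have Dmc: "B.D (- c)" and h3: "B.h (- c) = - c'" using B.NEG[OF Dc'] h2 by auto
      have eq: "x + c + - c = x" by simp
      have "B.h (x + c + - c) = B.h (x + c) + B.h (- c)" using B.ADD[OF Dxc Dmc] Dbx' eq by simp
      thus ?thesis using eq h1 h3 x'_def by simp
    qed
  qed
  thus ?thesis using b'_def by simp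
qed

lemma two_Q: assumes "ind2 p q" "p \<in> Q s" "q \<in> Q s" shows False
proof -
  obtain w where "Rep s w" using rep_ex by blast
  thus False using two_in_line[OF assms(1)] assms(2,3) unfolding Rep_def by blast
qed

lemma pts_roles:
  assumes s: "x + y + z = 0" and i: "ind3 p q r"
    and "p \<in> Q x \<or> p \<in> Q y \<or> p \<in> Q z" "q \<in> Q x \<or> q \<in> Q y \<or> q \<in> Q z"
    "r \<in> Q x \<or> r \<in> Q y \<or> r \<in> Q z"
  shows False
proof -
  have i2: "ind2 p q" "ind2 p r" "ind2 q r" using i ind3_ind2 by auto
  have ip: "ind3 p r q" "ind3 q p r" "ind3 q r p" "ind3 r p q" "ind3 r q p"
    using i ind3_perm1 ind3_perm2 by blast+
  have ss: "x + z + y = 0" "y + x + z = 0" "y + z + x = 0" "z + x + y = 0" "z + y + x = 0"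
    using s by (simp_all add: add_ac)
  note T = three_pts[OF s] three_pts[OF ss(1)] three_pts[OF ss(2)] three_pts[OF ss(3)]
    three_pts[OF ss(4)] three_pts[OF ss(5)]
  note W = two_Q[OF i2(1)] two_Q[OF i2(2)] two_Q[OF i2(3)]
  from assms(3,4,5) show False
    by (elim disjE) (blast intro: T[OF _ _ _ i] T[OF _ _ _ ip(1)] T[OF _ _ _ ip(2)]
       T[OF _ _ _ ip(3)] T[OF _ _ _ ip(4)] T[OF _ _ _ ip(5)] W)+
qed

theorem core_main: "\<exists>f. (\<forall>x y. f (x + y) = f x + f y) \<and> (\<forall>x. Rep x (f x))"
proof -
  obtain p q r u v w where R: "Rep p u" "Rep q v" "Rep r w" "ind3 u v w"
    using rank unfolding Rep_def by blast
  have u0: "u \<noteq> 0" and uv: "ind2 u v" and uw: "ind2 u w"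
    using R(4) ind3_ind2 ind2_nz by blast+
  have bA: "base sc Q p u" by (rule base_intro[OF R(1) u0])
  interpret A: base sc Q p u by (rule bA)
  have Dq: "A.D q" using A.D_iff[OF R(2)] uv by blast
  have Dr: "A.D r" using A.D_iff[OF R(3)] uw by blast
  define b' c' where "b' = A.h q" and "c' = A.h r"
  have rb: "Rep q b'" using A.hP[OF Dq] b'_def by auto
  have rc: "Rep r c'" using A.hP[OF Dr] c'_def by auto
  have v0: "v \<noteq> 0" "w \<noteq> 0" using R(4) ind3_ind2 ind2_nz by blast+
  have b0: "b' \<noteq> 0" using rb R(2) v0 rep_nz_iff by blast
  have c0: "c' \<noteq> 0" using rc R(3) v0 rep_nz_iff by blast
  have "b' \<in> sp1 v" using rep_eq_sp[OF R(2) rb] sp1_self by blast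
  then obtain m where m: "b' = m \<cdot> v" unfolding sp1_iff by blast
  have "c' \<in> sp1 w" using rep_eq_sp[OF R(3) rc] sp1_self by blast
  then obtain n where n: "c' = n \<cdot> w" unfolding sp1_iff by blast
  have "m \<noteq> 0" "n \<noteq> 0" using m n b0 c0 by auto
  hence "ind3 (1 \<cdot> u) (m \<cdot> v) (n \<cdot> w)" using ind3_scale[OF R(4), of 1 m n] by simp
  hence i3: "ind3 u b' c'" using m n by simp
  have ub: "ind2 u b'" "ind2 u c'" "ind2 b' c'" using i3 ind3_ind2 by blast+
  have bB: "base sc Q q b'" by (rule base_intro[OF rb b0])
  interpret B: base sc Q q b' by (rule bB)
  have bC: "base sc Q r c'" by (rule base_intro[OF rc c0])
  interpret C: base sc Q r c' by (rule bC)
  have TAB: "B.h x = A.h x" if "A.D x" "B.D x" for x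
    using transfer[OF bA Dq] b0 that b'_def by simp
  have TAC: "C.h x = A.h x" if "A.D x" "C.D x" for x
    using transfer[OF bA Dr] c0 that c'_def by simp
  have DBr: "B.D r" using B.D_iff[OF rc] ub(3) by blast
  have hBr: "B.h r = c'" using TAB[OF Dr DBr] c'_def by simp
  have TBC: "C.h x = B.h x" if "B.D x" "C.D x" for x
    using transfer[OF bB DBr] c0 that hBr by simp
  define f where "f x = (if A.D x then A.h x else if B.D x then B.h x else C.h x)" for x
  have cover: "A.D x \<or> B.D x" for x
  proof (rule ccontr)
    assume "\<not> (A.D x \<or> B.D x)"
    hence "u \<in> Q x" "b' \<in> Q x" unfolding A.D_def B.D_def by auto
    thus False using two_Q[OF ub(1)] by blast
  qed
  have fA: "f x = A.h x" if "A.D x" for x using that f_def by simp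
  have fB: "f x = B.h x" if "B.D x" for x using that f_def TAB by simp
  have fC: "f x = C.h x" if "C.D x" for x using that f_def TAC TBC cover by auto
  have frep: "Rep x (f x)" for x
    using cover[of x] fA fB A.hP B.hP by metis
  have fadd: "f (x + y) = f x + f y" for x y
  proof -
    have "(A.D x \<and> A.D y \<and> A.D (x + y)) \<or> (B.D x \<and> B.D y \<and> B.D (x + y)) \<or>
          (C.D x \<and> C.D y \<and> C.D (x + y))"
    proof (rule ccontr)
      assume na: "\<not> ?thesis"
      have qz: "Q (- (x + y)) = Q (x + y)" by (rule Qneg)
      have s: "x + y + - (x + y) = 0" by simp
      show False
        by (rule pts_roles[OF s i3]) (use na qz in \<open>auto simp: A.D_def B.D_def C.D_def\<close>)
    qed
    thus ?thesis using fA fB fC A.ADD B.ADD C.ADD by metis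
  qed
  show ?thesis using fadd frep by blast
qed

lemma semilin:
  fixes sc1 :: "'k1::division_ring \<Rightarrow> 'x \<Rightarrow> 'x"
  assumes lv: "left_vs sc1" and Qs: "\<And>l x. Q (sc1 l x) \<subseteq> Q x"
    and fadd: "\<And>x y. f (x + y) = f x + f y" and frep: "\<And>x. Rep x (f x)"
  shows "\<exists>\<sigma>. divring_hom \<sigma> \<and> (\<forall>l v. f (sc1 l v) = \<sigma> l \<cdot> f v)"
proof -
  interpret V1: lvs sc1 by (rule lvs.intro[OF lv])
  obtain p q r u v w where R: "Rep p u" "Rep q v" "Rep r w" "ind3 u v w"
    using rank unfolding Rep_def by blast
  have u0: "u \<noteq> 0" using R(4) ind3_ind2 ind2_nz by blast
  have p0: "f p \<noteq> 0" using rep_nz_iff[OF R(1)] rep_nz_iff[OF frep[of p]] u0 by blast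
  have fl: "f (sc1 l x) \<in> sp1 (f x)" for l x
    using rep_self[OF frep[of "sc1 l x"]] Qs[of l x] frep[of x] unfolding Rep_def by blast
  define \<sigma> where "\<sigma> l = (THE m. f (sc1 l p) = m \<cdot> f p)" for l
  have \<sigma>p: "f (sc1 l p) = \<sigma> l \<cdot> f p" for l
  proof -
    obtain m where m: "f (sc1 l p) = m \<cdot> f p" using fl[of l p] unfolding sp1_iff by blast
    have "\<sigma> l = m" unfolding \<sigma>_def
      by (rule the_equality) (use m sc_cancel p0 in auto)
    thus ?thesis using m by simp
  qed
  have key: "f (sc1 l x) = \<sigma> l \<cdot> f x" if i2: "ind2 (f p) (f x)" for l x
  proof -
    obtain m1 where m1: "f (sc1 l x) = m1 \<cdot> f x" using fl[of l x] unfolding sp1_iff by blast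
    obtain m2 where m2: "f (sc1 l (x + p)) = m2 \<cdot> f (x + p)" using fl[of l "x + p"] unfolding sp1_iff by blast
    have "f (sc1 l (x + p)) = f (sc1 l x) + f (sc1 l p)" using fadd by simp
    hence "m2 \<cdot> (f x + f p) = m1 \<cdot> f x + \<sigma> l \<cdot> f p" using m1 m2 \<sigma>p fadd by simp
    hence "(m2 - \<sigma> l) \<cdot> f p + (m2 - m1) \<cdot> f x = 0" by (simp add: sc_diff1 algebra_simps)
    hence "m2 - \<sigma> l = 0 \<and> m2 - m1 = 0" using i2 unfolding ind2_def by blast
    hence "m1 = \<sigma> l" by (metis right_minus_eq)
    thus ?thesis using m1 by simp
  qed
  obtain t where t: "ind2 (f p) (f t)"
  proof -
    have "\<not> (u \<in> sp2 (f p) 0 \<and> v \<in> sp2 (f p) 0 \<and> w \<in> sp2 (f p) 0)"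
      using three_in_plane R(4) by blast
    then obtain t z where tz: "Rep t z" "z \<notin> sp1 (f p)" using R by auto
    have "f t \<notin> sp1 (f p)"
    proof
      assume "f t \<in> sp1 (f p)"
      hence "sp1 (f t) \<subseteq> sp1 (f p)" by (rule sp1_sub)
      moreover have "z \<in> sp1 (f t)" using rep_eq_sp[OF frep[of t] tz(1)] sp1_self by blast
      ultimately show False using tz(2) by blast
    qed
    hence "ind2 (f p) (f t)" using ind2_iff p0 by blast
    thus ?thesis using that by blast
  qed
  have all: "f (sc1 l x) = \<sigma> l \<cdot> f x" for l x
  proof (cases "f x = 0")
    case True
    thus ?thesis using fl[of l x] by simp
  next
    case False
    show ?thesis
    proof (cases "ind2 (f p) (f x)")
      case True thus ?thesis by (rule key)
    next
      case F2: False
      have fxp: "f x \<in> sp1 (f p)" using not_ind2[OF F2 p0] .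
      have "f x + f t \<notin> sp1 (f p)"
      proof
        assume "f x + f t \<in> sp1 (f p)"
        hence "(f x + f t) + - f x \<in> sp1 (f p)" using fxp sp1_add sp1_neg_mem by blast
        thus False using t ind2_iff by simp
      qed
      hence "ind2 (f p) (f (x + t))" using ind2_iff p0 fadd by simp
      hence k1: "f (sc1 l (x + t)) = \<sigma> l \<cdot> f (x + t)" by (rule key)
      have k2: "f (sc1 l t) = \<sigma> l \<cdot> f t" by (rule key[OF t])
      have "f (sc1 l x) + f (sc1 l t) = \<sigma> l \<cdot> f x + \<sigma> l \<cdot> f t"
        using k1 fadd by simp
      thus ?thesis using k2 by simp
    qed
  qed
  have "divring_hom \<sigma>" unfolding divring_hom_def
  proof (intro conjI allI)
    fix l1 l2
    have "\<sigma> (l1 + l2) \<cdot> f p = f (sc1 (l1 + l2) p)" using \<sigma>p by simp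
    also have "\<dots> = f (sc1 l1 p + sc1 l2 p)" by (simp add: V1.sc_add)
    also have "\<dots> = (\<sigma> l1 + \<sigma> l2) \<cdot> f p" using fadd \<sigma>p by (simp add: sc_add)
    finally show "\<sigma> (l1 + l2) = \<sigma> l1 + \<sigma> l2" using sc_cancel p0 by blast
    have "\<sigma> (l1 * l2) \<cdot> f p = f (sc1 (l1 * l2) p)" using \<sigma>p by simp
    also have "\<dots> = f (sc1 l1 (sc1 l2 p))" by simp
    also have "\<dots> = \<sigma> l1 \<cdot> f (sc1 l2 p)" by (rule all)
    also have "\<dots> = (\<sigma> l1 * \<sigma> l2) \<cdot> f p" using \<sigma>p by simp
    finally show "\<sigma> (l1 * l2) = \<sigma> l1 * \<sigma> l2" using sc_cancel p0 by blast
  next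
    have "\<sigma> 1 \<cdot> f p = 1 \<cdot> f p" using \<sigma>p[of 1] by simp
    thus "\<sigma> 1 = 1" using sc_cancel p0 by blast
  qed
  thus ?thesis using all by blast
qed

end


locale dp =
  fixes scE :: "'k::division_ring \<Rightarrow> 'e::ab_group_add \<Rightarrow> 'e"
    and scF :: "'f::ab_group_add \<Rightarrow> 'k \<Rightarrow> 'f"
    and beta :: "'e \<Rightarrow> 'f \<Rightarrow> 'k"
  assumes dp: "dual_pair scE scF beta"
begin

sublocale E: lvs scE
  by (rule lvs.intro) (use dp in \<open>simp add: dual_pair_def\<close>)

lemma b_addL: "beta (x + x') y = beta x y + beta x' y" using dp unfolding dual_pair_def by blast
lemma b_scL: "beta (scE a x) y = a * beta x y" using dp unfolding dual_pair_def by blast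
lemma b_addR: "beta x (y + y') = beta x y + beta x y'" using dp unfolding dual_pair_def by blast
lemma b_scR: "beta x (scF y a) = beta x y * a" using dp unfolding dual_pair_def by blast
lemma ndL: "(\<forall>y. beta x y = 0) \<Longrightarrow> x = 0" using dp unfolding dual_pair_def by blast

lemma b_0L[simp]: "beta 0 y = 0"
  using b_addL[of 0 0 y] by simp
lemma b_0R[simp]: "beta x 0 = 0"
  using b_addR[of x 0 0] by simp
lemma b_negL: "beta (- x) y = - beta x y"
  using b_addL[of x "- x" y] by (simp add: eq_neg_iff_add_eq_0 add.commute)
lemma b_negR: "beta x (- y) = - beta x y"
  using b_addR[of x y "- y"] by (simp add: eq_neg_iff_add_eq_0 add.commute)
lemma b_diffL: "beta (x - x') y = beta x y - beta x' y"
  using b_addL[of x "- x'" y] b_negL by simp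
lemma b_diffR: "beta x (y - y') = beta x y - beta x y'"
  using b_addR[of x y "- y'"] b_negR by simp

definition cl :: "'e set \<Rightarrow> 'e set" where "cl A = perpF beta (perpE beta A)"

lemma cl_ext: "A \<subseteq> cl A" unfolding cl_def perpE_def perpF_def by auto
lemma cl_mono: "A \<subseteq> B \<Longrightarrow> cl A \<subseteq> cl B" unfolding cl_def perpE_def perpF_def by auto
lemma cl_idem: "cl (cl A) = cl A"
proof -
  have "perpE beta (cl A) = perpE beta A" unfolding cl_def perpE_def perpF_def by auto
  thus ?thesis unfolding cl_def by simp
qed
lemma closed_iff: "A \<in> closedL beta \<longleftrightarrow> cl A = A" unfolding closedL_def cl_def by simp
lemma Ljoin_eq: "Ljoin beta S = cl (\<Union>S)" unfolding Ljoin_def cl_def by simp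
lemma Ljoin_closed: "Ljoin beta S \<in> closedL beta" unfolding closed_iff Ljoin_eq cl_idem ..
lemma cl_closed: "cl A \<in> closedL beta" unfolding closed_iff cl_idem ..
lemma Lbot_eq: "Lbot beta = {0}"
proof -
  have "perpE beta {} = UNIV" unfolding perpE_def by auto
  hence "Lbot beta = {x. \<forall>y. beta x y = 0}" unfolding Lbot_def Ljoin_def perpF_def by simp
  thus ?thesis using ndL by auto
qed
lemma cl_zero: "cl {0} = {0}"
proof -
  have "perpE beta {0} = UNIV" unfolding perpE_def by auto
  hence "cl {0} = {x. \<forall>y. beta x y = 0}" unfolding cl_def perpF_def by simp
  thus ?thesis using ndL by auto
qed

lemma cl_0: "0 \<in> cl A" unfolding cl_def perpF_def by simp
lemma cl_add: "x \<in> cl A \<Longrightarrow> y \<in> cl A \<Longrightarrow> x + y \<in> cl A"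
  unfolding cl_def perpF_def by (simp add: b_addL)
lemma cl_sc: "x \<in> cl A \<Longrightarrow> scE a x \<in> cl A"
  unfolding cl_def perpF_def by (simp add: b_scL)

definition Aplus :: "'e set \<Rightarrow> 'e \<Rightarrow> 'e set" where
  "Aplus A x = {a + scE l x | a l. a \<in> A}"

lemma addline:
  assumes A: "cl A = A" shows "cl (Aplus A x) = Aplus A x"
proof
  show "Aplus A x \<subseteq> cl (Aplus A x)" by (rule cl_ext)
  show "cl (Aplus A x) \<subseteq> Aplus A x"
  proof (cases "x \<in> A")
    case True
    have "Aplus A x \<subseteq> A"
    proof
      fix e assume "e \<in> Aplus A x"
      then obtain a l where e: "e = a + scE l x" "a \<in> A" unfolding Aplus_def by blast
      have xA: "x \<in> cl A" using True A by simp
      have aA: "a \<in> cl A" using e(2) A by simp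
      have "a + scE l x \<in> cl A" by (intro cl_add cl_sc aA xA)
      thus "e \<in> A" using A e(1) by simp
    qed
    moreover have "A \<subseteq> Aplus A x"
    proof
      fix a assume "a \<in> A"
      hence "a + scE 0 x \<in> Aplus A x" unfolding Aplus_def by blast
      thus "a \<in> Aplus A x" by simp
    qed
    ultimately have "Aplus A x = A" by blast
    thus ?thesis using A by simp
  next
    case False
    hence "x \<notin> perpF beta (perpE beta A)" using A unfolding cl_def by simp
    then obtain y where y: "y \<in> perpE beta A" "beta x y \<noteq> 0" unfolding perpF_def by auto
    define y0 where "y0 = scF y (inverse (beta x y))"
    have xy0: "beta x y0 = 1" using y(2) unfolding y0_def by (simp add: b_scR)
    have y0A: "y0 \<in> perpE beta A" using y(1) unfolding y0_def perpE_def by (simp add: b_scR)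
    show ?thesis
    proof
      fix z assume z: "z \<in> cl (Aplus A x)"
      define z' where "z' = z - scE (beta z y0) x"
      have "z' \<in> perpF beta (perpE beta A)" unfolding perpF_def
      proof (intro CollectI ballI)
        fix w assume w: "w \<in> perpE beta A"
        define w' where "w' = w - scF y0 (beta x w)"
        have "w' \<in> perpE beta (Aplus A x)" unfolding perpE_def
        proof (intro CollectI ballI)
          fix e assume "e \<in> Aplus A x"
          then obtain a l where e: "e = a + scE l x" "a \<in> A" unfolding Aplus_def by blast
          have "beta a w = 0" "beta a y0 = 0" using w y0A e(2) unfolding perpE_def by auto
          hence "beta a w' = 0" unfolding w'_def by (simp add: b_diffR b_scR)
          moreover have "beta x w' = 0" unfolding w'_def by (simp add: b_diffR b_scR xy0)
          ultimately show "beta e w' = 0" unfolding e(1) by (simp add: b_addL b_scL)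
        qed
        hence "beta z w' = 0" using z unfolding cl_def perpF_def by blast
        hence "beta z w = beta z y0 * beta x w" unfolding w'_def by (simp add: b_diffR b_scR)
        thus "beta z' w = 0" unfolding z'_def by (simp add: b_diffL b_scL)
      qed
      hence "z' \<in> A" using A unfolding cl_def by simp
      moreover have "z = z' + scE (beta z y0) x" unfolding z'_def by simp
      ultimately show "z \<in> Aplus A x" unfolding Aplus_def by blast
    qed
  qed
qed

lemma span_eq: "span1 scE v = Aplus {0} v"
proof (rule set_eqI)
  fix z
  have "z \<in> span1 scE v \<longleftrightarrow> (\<exists>l. z = scE l v)" unfolding span1_def by auto
  also have "\<dots> \<longleftrightarrow> (\<exists>a l. z = a + scE l v \<and> a \<in> {0})" by auto
  also have "\<dots> \<longleftrightarrow> z \<in> Aplus {0} v" unfolding Aplus_def by blast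
  finally show "z \<in> span1 scE v \<longleftrightarrow> z \<in> Aplus {0} v" .
qed

lemma span_closed: "cl (span1 scE v) = span1 scE v"
  unfolding span_eq by (rule addline[OF cl_zero])

lemma sp2_eq: "E.sp2 u v = Aplus (span1 scE u) v"
proof (rule set_eqI)
  fix z
  have "z \<in> E.sp2 u v \<longleftrightarrow> (\<exists>a b. z = scE a u + scE b v)" by (rule E.sp2_iff)
  also have "\<dots> \<longleftrightarrow> (\<exists>e l. z = e + scE l v \<and> (\<exists>a. e = scE a u))" by blast
  also have "\<dots> \<longleftrightarrow> z \<in> Aplus (span1 scE u) v" unfolding Aplus_def span1_def by blast
  finally show "z \<in> E.sp2 u v \<longleftrightarrow> z \<in> Aplus (span1 scE u) v" .
qed

lemma sp2_closed: "cl (E.sp2 u v) = E.sp2 u v"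
  unfolding sp2_eq by (rule addline[OF span_closed])

lemma closed_span_sub: assumes "cl A = A" "v \<in> A" shows "span1 scE v \<subseteq> A"
proof
  fix z assume "z \<in> span1 scE v"
  then obtain l where z: "z = scE l v" unfolding span1_def by blast
  have "v \<in> cl A" using assms by simp
  hence "scE l v \<in> cl A" by (rule cl_sc)
  thus "z \<in> A" using assms z by simp
qed

lemma atom_span: assumes "v \<noteq> 0" shows "Latom beta (span1 scE v)"
  unfolding Latom_def
proof (intro conjI ballI impI)
  show "span1 scE v \<in> closedL beta" using span_closed closed_iff by blast
  show "span1 scE v \<noteq> Lbot beta" using assms E.sp1_eq0 unfolding Lbot_eq E.sp1_def by simp
  fix B assume B: "B \<in> closedL beta" "B \<subset> span1 scE v"
  have Bc: "cl B = B" using B(1) closed_iff by blast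
  have "B \<subseteq> {0}"
  proof
    fix w assume w: "w \<in> B"
    show "w \<in> {0}"
    proof (rule ccontr)
      assume "w \<notin> {0}"
      hence w0: "w \<noteq> 0" by simp
      have "w \<in> E.sp1 v" using w B(2) unfolding E.sp1_def by blast
      hence "E.sp1 w = E.sp1 v" using E.sp1_mem_eq w0 by blast
      hence "span1 scE v \<subseteq> B" using closed_span_sub[OF Bc w] unfolding E.sp1_def by simp
      thus False using B(2) by blast
    qed
  qed
  moreover have "0 \<in> B" using Bc cl_0 by metis
  ultimately show "B = Lbot beta" unfolding Lbot_eq by blast
qed

lemma atom_ex: assumes "Latom beta A" shows "\<exists>w. w \<noteq> 0 \<and> A = span1 scE w"
proof -
  have Ac: "cl A = A" using assms closed_iff unfolding Latom_def by blast
  have "A \<noteq> {0}" using assms Lbot_eq unfolding Latom_def by simp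
  moreover have "0 \<in> A" using Ac cl_0 by metis
  ultimately obtain w where w: "w \<in> A" "w \<noteq> 0" by blast
  have s: "span1 scE w \<subseteq> A" by (rule closed_span_sub[OF Ac w(1)])
  have "span1 scE w \<in> closedL beta" using span_closed closed_iff by blast
  moreover have "span1 scE w \<noteq> Lbot beta" using w(2) E.sp1_eq0 unfolding Lbot_eq E.sp1_def by simp
  ultimately have "\<not> span1 scE w \<subset> A" using assms unfolding Latom_def by blast
  hence "A = span1 scE w" using s by blast
  thus ?thesis using w(2) by blast
qed

end


theorem corollary8p4:
  fixes scE1 :: "'k1::division_ring \<Rightarrow> 'e1::ab_group_add \<Rightarrow> 'e1"
    and scF1 :: "'f1::ab_group_add \<Rightarrow> 'k1 \<Rightarrow> 'f1"
    and beta1 :: "'e1 \<Rightarrow> 'f1 \<Rightarrow> 'k1"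
    and scE2 :: "'k2::division_ring \<Rightarrow> 'e2::ab_group_add \<Rightarrow> 'e2"
    and scF2 :: "'f2::ab_group_add \<Rightarrow> 'k2 \<Rightarrow> 'f2"
    and beta2 :: "'e2 \<Rightarrow> 'f2 \<Rightarrow> 'k2"
    and g :: "'e1 set \<Rightarrow> 'e2 set"
  assumes "dual_pair scE1 scF1 beta1"
    and "dual_pair scE2 scF2 beta2"
    and "g ` closedL beta1 \<subseteq> closedL beta2"
    and "\<forall>S. S \<subseteq> closedL beta1 \<longrightarrow> g (Ljoin beta1 S) = Ljoin beta2 (g ` S)"
    and "\<forall>A. Latom beta1 A \<longrightarrow> Latom beta2 (g A) \<or> g A = Lbot beta2"
    and "length_ge (g ` closedL beta1) 3"
  shows "\<exists>f. semilinear scE1 scE2 f \<and> (\<forall>v. g (span1 scE1 v) = span1 scE2 (f v))"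
proof -
  interpret D1: dp scE1 scF1 beta1 by (rule dp.intro) (rule assms(1))
  interpret D2: dp scE2 scF2 beta2 by (rule dp.intro) (rule assms(2))
  have gcl: "D2.cl (g A) = g A" if "D1.cl A = A" for A
    using assms(3) that D1.closed_iff D2.closed_iff by blast
  have hj: "g (D1.cl (\<Union>S)) = D2.cl (\<Union>(g ` S))" if "\<And>A. A \<in> S \<Longrightarrow> D1.cl A = A" for S
  proof -
    have "S \<subseteq> closedL beta1" using that D1.closed_iff by blast
    thus ?thesis using assms(4) D1.Ljoin_eq D2.Ljoin_eq by metis
  qed
  have gmono: "g A \<subseteq> g B" if A: "D1.cl A = A" and B: "D1.cl B = B" and AB: "A \<subseteq> B" for A B
  proof -
    have "B = D1.cl (\<Union>{A, B})" using AB B by (simp add: Un_absorb1)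
    hence "g B = D2.cl (\<Union>(g ` {A, B}))" using hj[of "{A, B}"] A B by auto
    also have "\<dots> \<supseteq> g A" using D2.cl_ext[of "g A \<union> g B"] by auto
    finally show ?thesis .
  qed
  define Q where "Q x = g (span1 scE1 x)" for x
  have spc: "D1.cl (span1 scE1 x) = span1 scE1 x" for x by (rule D1.span_closed)
  have s10: "span1 scE1 0 = {0}" unfolding span1_def by auto
  have Q0: "Q 0 = {0}"
  proof -
    have "D1.cl (\<Union>{}) = {0}" using D1.Lbot_eq D1.Ljoin_eq unfolding Lbot_def by simp
    hence "Q 0 = g (D1.cl (\<Union>{}))" unfolding Q_def s10 by simp
    also have "\<dots> = D2.cl (\<Union>(g ` {}))" by (rule hj) simp
    also have "\<dots> = {0}" using D2.Lbot_eq D2.Ljoin_eq unfolding Lbot_def by simp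
    finally show ?thesis .
  qed
  have Qrep: "\<exists>w. Q x = D2.E.sp1 w" for x
  proof (cases "x = 0")
    case True thus ?thesis using Q0 D2.E.sp1_0 by metis
  next
    case False
    have "Latom beta2 (Q x) \<or> Q x = Lbot beta2" unfolding Q_def using assms(5) D1.atom_span[OF False] by blast
    thus ?thesis
    proof
      assume "Latom beta2 (Q x)"
      then obtain w where "Q x = span1 scE2 w" using D2.atom_ex by blast
      thus ?thesis unfolding D2.E.sp1_def by blast
    next
      assume "Q x = Lbot beta2"
      thus ?thesis using D2.Lbot_eq D2.E.sp1_0 by metis
    qed
  qed
  have Qneg: "Q (- x) = Q x" for x
    unfolding Q_def using D1.E.sp1_neg unfolding D1.E.sp1_def by simp
  have Qadd: "Q (x + y) \<subseteq> D2.E.sp2 u v" if u: "Q x = D2.E.sp1 u" and v: "Q y = D2.E.sp1 v" for x y u v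
  proof -
    define J where "J = D1.cl (\<Union>{span1 scE1 x, span1 scE1 y})"
    have Jc: "D1.cl J = J" unfolding J_def D1.cl_idem ..
    have "x \<in> span1 scE1 x" "y \<in> span1 scE1 y" using D1.E.sp1_self unfolding D1.E.sp1_def by auto
    hence x1: "x \<in> \<Union>{span1 scE1 x, span1 scE1 y}" and y1: "y \<in> \<Union>{span1 scE1 x, span1 scE1 y}" by auto
    have "x \<in> J" unfolding J_def by (rule subsetD[OF D1.cl_ext x1])
    moreover have "y \<in> J" unfolding J_def by (rule subsetD[OF D1.cl_ext y1])
    ultimately have xJ: "x \<in> D1.cl J" "y \<in> D1.cl J" unfolding Jc by auto
    have "x + y \<in> D1.cl J" by (rule D1.cl_add[OF xJ])
    hence "x + y \<in> J" unfolding Jc .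
    hence "span1 scE1 (x + y) \<subseteq> J" by (rule D1.closed_span_sub[OF Jc])
    hence "Q (x + y) \<subseteq> g J" unfolding Q_def by (rule gmono[OF spc Jc])
    also have "g J = D2.cl (\<Union>(g ` {span1 scE1 x, span1 scE1 y}))" unfolding J_def
    proof (rule hj)
      fix A assume "A \<in> {span1 scE1 x, span1 scE1 y}"
      thus "D1.cl A = A" using spc by auto
    qed
    also have "\<Union>(g ` {span1 scE1 x, span1 scE1 y}) = Q x \<union> Q y"
      unfolding Q_def by (rule refl[THEN arg_cong[where f=id], simplified, OF ] | simp only: image_insert image_empty Union_insert Union_empty Un_empty_right)
    also have "Q x \<union> Q y = D2.E.sp1 u \<union> D2.E.sp1 v" unfolding u v ..
    also have "D2.cl (D2.E.sp1 u \<union> D2.E.sp1 v) \<subseteq> D2.cl (D2.E.sp2 u v)"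
    proof (rule D2.cl_mono)
      show "D2.E.sp1 u \<union> D2.E.sp1 v \<subseteq> D2.E.sp2 u v" using D2.E.sp1_sub2 D2.E.sp1_sub2' by (rule Un_least)
    qed
    also have "\<dots> = D2.E.sp2 u v" by (rule D2.sp2_closed)
    finally show ?thesis .
  qed
  have Qsc: "Q (scE1 l x) \<subseteq> Q x" for l x
  proof -
    have "scE1 l x \<in> D1.E.sp1 x" by (rule D1.E.sp1_smult[OF D1.E.sp1_self])
    hence "D1.E.sp1 (scE1 l x) \<subseteq> D1.E.sp1 x" by (rule D1.E.sp1_sub)
    hence "span1 scE1 (scE1 l x) \<subseteq> span1 scE1 x" unfolding D1.E.sp1_def .
    thus ?thesis unfolding Q_def by (rule gmono[OF spc spc])
  qed
  have rank: "\<exists>a b c u v w. Q a = D2.E.sp1 u \<and> Q b = D2.E.sp1 v \<and> Q c = D2.E.sp1 w \<and> D2.E.ind3 u v w"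
  proof (rule ccontr)
    assume N: "\<not> ?thesis"
    obtain c where c: "\<forall>i\<le>3. c i \<in> g ` closedL beta1" "\<forall>i<3. c i \<subset> c (Suc i)"
      using assms(6) unfolding length_ge_def by blast
    have cc: "D2.cl (c i) = c i" if "i \<le> 3" for i
      using c(1) that assms(3) D2.closed_iff by blast
    have c01: "c 0 \<subset> c 1" and c12: "c 1 \<subset> c 2" and c23: "c 2 \<subset> c 3" using c(2)
      by (auto simp: numeral_eq_Suc)
    obtain p where p: "p \<in> c 1" "p \<notin> c 0" using c01 by blast
    have "0 \<in> c 0" using cc[of 0] D2.cl_0 by (metis zero_le)
    hence p0: "p \<noteq> 0" using p by blast
    obtain q where q: "q \<in> c 2" "q \<notin> c 1" using c12 by blast
    have "span1 scE2 p \<subseteq> c 1" by (rule D2.closed_span_sub[OF cc p(1)]) simp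
    hence qp: "q \<notin> D2.E.sp1 p" using q unfolding D2.E.sp1_def by blast
    obtain r where r: "r \<in> c 3" "r \<notin> c 2" using c23 by blast
    have "D2.E.sp2 p q \<subseteq> c 2"
    proof
      fix z assume "z \<in> D2.E.sp2 p q"
      then obtain a b where z: "z = scE2 a p + scE2 b q" unfolding D2.E.sp2_iff by blast
      have "p \<in> D2.cl (c 2)" "q \<in> D2.cl (c 2)" using p(1) q(1) c12 cc[of 2] by auto
      hence "scE2 a p + scE2 b q \<in> D2.cl (c 2)" by (intro D2.cl_add D2.cl_sc)
      thus "z \<in> c 2" using z cc[of 2] by simp
    qed
    hence rpq: "r \<notin> D2.E.sp2 p q" using r by blast
    have i3: "D2.E.ind3 p q r" using D2.E.ind3_iff D2.E.ind2_iff p0 qp rpq by blast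
    obtain A3 where A3: "A3 \<in> closedL beta1" "c 3 = g A3" using c(1) by auto
    have A3c: "D1.cl A3 = A3" using A3(1) D1.closed_iff by blast
    have bound: "\<exists>u v. \<forall>x. Q x \<subseteq> D2.E.sp2 u v"
    proof (cases "\<forall>x. Q x = {0}")
      case True thus ?thesis by (intro exI[of _ 0]) auto
    next
      case False
      then obtain x1 where x1: "Q x1 \<noteq> {0}" by blast
      obtain u where u: "Q x1 = D2.E.sp1 u" using Qrep by blast
      have u0: "u \<noteq> 0" using u x1 by auto
      show ?thesis
      proof (cases "\<forall>x. Q x \<subseteq> D2.E.sp1 u")
        case True thus ?thesis by (intro exI[of _ u] exI[of _ 0]) simp
      next
        case False
        then obtain x2 where x2: "\<not> Q x2 \<subseteq> D2.E.sp1 u" by blast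
        obtain v where v: "Q x2 = D2.E.sp1 v" using Qrep by blast
        have "v \<notin> D2.E.sp1 u" using x2 v D2.E.sp1_sub by blast
        hence uv: "D2.E.ind2 u v" using D2.E.ind2_iff u0 by blast
        have "Q x \<subseteq> D2.E.sp2 u v" for x
        proof -
          obtain w where w: "Q x = D2.E.sp1 w" using Qrep by blast
          have "w \<in> D2.E.sp2 u v"
          proof (rule ccontr)
            assume "w \<notin> D2.E.sp2 u v"
            hence "D2.E.ind3 u v w" using uv D2.E.ind3_iff by blast
            thus False using N u v w by blast
          qed
          thus ?thesis using w D2.E.sp1_in_sp2 by simp
        qed
        thus ?thesis by blast
      qed
    qed
    then obtain u v where uv: "\<And>x. Q x \<subseteq> D2.E.sp2 u v" by blast
    define S where "S = (\<lambda>x. span1 scE1 x) ` A3"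
    have US: "\<Union>S = A3"
    proof
      show "\<Union>S \<subseteq> A3" unfolding S_def using D1.closed_span_sub[OF A3c] by blast
      show "A3 \<subseteq> \<Union>S" unfolding S_def using D1.E.sp1_self unfolding D1.E.sp1_def by blast
    qed
    have hS: "D1.cl A = A" if "A \<in> S" for A using that spc unfolding S_def by auto
    have "g A3 = g (D1.cl (\<Union>S))" using US A3c by simp
    also have "\<dots> = D2.cl (\<Union>(g ` S))" by (rule hj[OF hS])
    also have "\<dots> \<subseteq> D2.cl (D2.E.sp2 u v)"
      using uv unfolding S_def Q_def by (intro D2.cl_mono) blast
    also have "\<dots> = D2.E.sp2 u v" by (rule D2.sp2_closed)
    finally have g3: "c 3 \<subseteq> D2.E.sp2 u v" using A3(2) by simp
    have "p \<in> c 3" "q \<in> c 3" "r \<in> c 3" using p(1) q(1) r(1) c12 c23 by auto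
    thus False using D2.E.three_in_plane[of p u v q r] g3 i3 by blast
  qed
  have C: "core scE2 Q"
    apply (intro core.intro core_axioms.intro lvs.intro)
    apply (rule D2.E.lvs[unfolded lvs_def])
    apply (rule Q0)
    apply (rule Qrep)
    apply (rule Qneg)
    apply (erule (1) Qadd)
    apply (rule rank)
    done
  interpret C: core scE2 Q by (rule C)
  obtain f where f: "\<And>x y. f (x + y) = f x + f y" "\<And>x. C.Rep x (f x)"
    using C.core_main by blast
  obtain \<sigma> where \<sigma>: "divring_hom \<sigma>" "\<forall>l v. f (scE1 l v) = scE2 (\<sigma> l) (f v)"
    using C.semilin[OF D1.E.lvs Qsc f] by blast
  have "semilinear scE1 scE2 f" unfolding semilinear_def using f(1) \<sigma> by blast
  moreover have "g (span1 scE1 v) = span1 scE2 (f v)" for v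
    using f(2)[of v] unfolding C.Rep_def Q_def D2.E.sp1_def by simp
  ultimately show ?thesis by blast
qed


end
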